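(* Let $V=\mathbb C^n$ with $n$ even and $n\ge8$. The rational map $\phi:\mathbb P(\Lambda^2V)\times\mathbb P(\Lambda^2V)\dashrightarrow\mathbb P(S^2V)$, $([A],[B])\mapsto[AJB-BJA]$, has differential of maximal rank at a general point (equivalently, the bilinear map $(A,B)\mapsto AJB-BJA$, $\Lambda^2V\times\Lambda^2V\to S^2V$, has surjective differential at a general point). In particular $\phi$ is dominant.
   Context: $\Lambda^2V$ and $S^2V$ denote skew-symmetric and symmetric $n\times n$ complex matrices, $n=2p$, and $J=\begin{bmatrix}0&I_p\\-I_p&0\end{bmatrix}$. *)

theory Defs
  imports "Jordan_Normal_Form.Matrix"
begin

definition skew_mats :: "nat \<Rightarrow> complex mat set" where
  "skew_mats n = {A. A \<in> carrier_mat n n \<and> transpose_mat A = - A}"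

definition sym_mats :: "nat \<Rightarrow> complex mat set" where
  "sym_mats n = {S. S \<in> carrier_mat n n \<and> transpose_mat S = S}"

definition Jmat :: "nat \<Rightarrow> complex mat" where
  "Jmat p = four_block_mat (0\<^sub>m p p) (1\<^sub>m p) (- 1\<^sub>m p) (0\<^sub>m p p)"

definition beta :: "nat \<Rightarrow> complex mat \<Rightarrow> complex mat \<Rightarrow> complex mat" where
  "beta p A B = A * Jmat p * B - B * Jmat p * A"

definition dbeta :: "nat \<Rightarrow> complex mat \<Rightarrow> complex mat \<Rightarrow> complex mat \<Rightarrow> complex mat \<Rightarrow> complex mat" where
  "dbeta p A B X Y = beta p X B + beta p A Y"

definition dbeta_surjective :: "nat \<Rightarrow> complex mat \<Rightarrow> complex mat \<Rightarrow> bool" where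
  "dbeta_surjective p A B \<longleftrightarrow>
     (\<forall>S \<in> sym_mats (2*p). \<exists>X \<in> skew_mats (2*p). \<exists>Y \<in> skew_mats (2*p). dbeta p A B X Y = S)"

inductive poly_fun2 :: "nat \<Rightarrow> (complex mat \<times> complex mat \<Rightarrow> complex) \<Rightarrow> bool" for n where
  const2: "poly_fun2 n (\<lambda>_. c)"
| fst2: "i < n \<Longrightarrow> j < n \<Longrightarrow> poly_fun2 n (\<lambda>(A,B). A $$ (i,j))"
| snd2: "i < n \<Longrightarrow> j < n \<Longrightarrow> poly_fun2 n (\<lambda>(A,B). B $$ (i,j))"
| add2: "poly_fun2 n f \<Longrightarrow> poly_fun2 n g \<Longrightarrow> poly_fun2 n (\<lambda>x. f x + g x)"
| mult2: "poly_fun2 n f \<Longrightarrow> poly_fun2 n g \<Longrightarrow> poly_fun2 n (\<lambda>x. f x * g x)"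

inductive poly_fun1 :: "nat \<Rightarrow> (complex mat \<Rightarrow> complex) \<Rightarrow> bool" for n where
  const1: "poly_fun1 n (\<lambda>_. c)"
| entry1: "i < n \<Longrightarrow> j < n \<Longrightarrow> poly_fun1 n (\<lambda>S. S $$ (i,j))"
| add1: "poly_fun1 n f \<Longrightarrow> poly_fun1 n g \<Longrightarrow> poly_fun1 n (\<lambda>x. f x + g x)"
| mult1: "poly_fun1 n f \<Longrightarrow> poly_fun1 n g \<Longrightarrow> poly_fun1 n (\<lambda>x. f x * g x)"

text \<open>A property holds at a general point of Lambda^2 V x Lambda^2 V: it holds on a
  nonempty Zariski-open subset, i.e. on the (nonempty) non-vanishing locus of some polynomial.\<close>
definition holds_generally2 :: "nat \<Rightarrow> (complex mat \<Rightarrow> complex mat \<Rightarrow> bool) \<Rightarrow> bool" where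
  "holds_generally2 n P \<longleftrightarrow>
     (\<exists>f. poly_fun2 n f \<and>
          (\<exists>A \<in> skew_mats n. \<exists>B \<in> skew_mats n. f (A, B) \<noteq> 0) \<and>
          (\<forall>A \<in> skew_mats n. \<forall>B \<in> skew_mats n. f (A, B) \<noteq> 0 \<longrightarrow> P A B))"

text \<open>Dominance of beta onto S^2 V: its image is Zariski dense in S^2 V.\<close>
definition beta_dominant :: "nat \<Rightarrow> bool" where
  "beta_dominant p \<longleftrightarrow>
     (\<forall>g. poly_fun1 (2*p) g \<longrightarrow>
          (\<forall>A \<in> skew_mats (2*p). \<forall>B \<in> skew_mats (2*p). g (beta p A B) = 0) \<longrightarrow>
          (\<forall>S \<in> sym_mats (2*p). g S = 0))"

end

theory Submission
  imports Defs "Jordan_Normal_Form.Determinant"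
begin


lemma mult_entry:
  assumes "A \<in> carrier_mat n m" "B \<in> carrier_mat m k" "i < n" "j < k"
  shows "(A * B) $$ (i,j) = (\<Sum>l<m. A $$ (i,l) * B $$ (l,j))"
  using assms by (simp add: scalar_prod_def lessThan_atLeast0)

lemma Jmat_carrier[simp]: "Jmat p \<in> carrier_mat (2*p) (2*p)"
  unfolding Jmat_def by (auto intro!: four_block_carrier_mat)

lemma Jmat_dim[simp]: "dim_row (Jmat p) = 2*p" "dim_col (Jmat p) = 2*p"
  by (simp_all add: Jmat_def)

lemma Jentry:
  assumes "i < 2*p" "j < 2*p"
  shows "Jmat p $$ (i,j) = (if i < p then (if j = i+p then 1 else 0) else (if i = j+p then -1 else 0))"
  using assms unfolding Jmat_def by (auto simp: index_mat_four_block)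

lemma sum_split_add: fixes p q :: nat shows "(\<Sum>k<p+q. g k) = (\<Sum>k<p. g k) + (\<Sum>k<q. g (k+p))"
  by (induction q) (simp_all add: ac_simps)

lemma sum_split2: fixes p :: nat shows "(\<Sum>k<2*p. g k) = (\<Sum>k<p. g k) + (\<Sum>k<p. g (k+p))"
  using sum_split_add[where g=g and p=p and q=p] by (simp add: mult_2)

lemma JU:
  assumes "U \<in> carrier_mat (2*p) (2*p)" "i < 2*p" "j < 2*p"
  shows "(Jmat p * U) $$ (i,j) = (if i < p then U $$ (i+p,j) else - U $$ (i-p,j))"
proof -
  have "(Jmat p * U) $$ (i,j) = (\<Sum>k<2*p. Jmat p $$ (i,k) * U $$ (k,j))"
    using assms by (simp only: mult_entry[OF Jmat_carrier assms(1)])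
  also have "\<dots> = (\<Sum>k<2*p. (if i < p then (if k = i+p then U $$ (k,j) else 0) else (if k = i - p then - U $$ (k,j) else 0)))"
    using assms by (intro sum.cong) (auto simp: Jentry)
  also have "\<dots> = (if i < p then U $$ (i+p,j) else - U $$ (i-p,j))"
    using assms by (auto simp: sum.delta')
  finally show ?thesis .
qed

lemma UJ:
  assumes "U \<in> carrier_mat (2*p) (2*p)" "i < 2*p" "j < 2*p"
  shows "(U * Jmat p) $$ (i,j) = (if j < p then - U $$ (i,j+p) else U $$ (i,j-p))"
proof -
  have "(U * Jmat p) $$ (i,j) = (\<Sum>k<2*p. U $$ (i,k) * Jmat p $$ (k,j))"
    using assms by (simp only: mult_entry[OF assms(1) Jmat_carrier])
  also have "\<dots> = (\<Sum>k<2*p. (if j < p then (if k = j+p then - U $$ (i,k) else 0) else (if k = j - p then U $$ (i,k) else 0)))"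
    using assms by (intro sum.cong) (auto simp: Jentry)
  also have "\<dots> = (if j < p then - U $$ (i,j+p) else U $$ (i,j-p))"
    using assms by (auto simp: sum.delta')
  finally show ?thesis .
qed


definition nx :: "nat \<Rightarrow> nat \<Rightarrow> nat" where "nx p i = (if Suc i < p then Suc i else 0)"
definition pv :: "nat \<Rightarrow> nat \<Rightarrow> nat" where "pv p i = (if i = 0 then p - 1 else i - 1)"
definition G0f :: "nat \<Rightarrow> nat \<Rightarrow> complex" where
  "G0f a b = (if a = 0 \<and> b = 2 then 1 else if a = 2 \<and> b = 0 then -1 else 0)"
definition Mf :: "nat \<Rightarrow> nat \<Rightarrow> nat \<Rightarrow> complex" where
  "Mf p k j = (if k < p then (if j < p \<and> k = nx p j then 1 else 0)
     else (if j < p then G0f (k-p) j else if j - p = nx p (k - p) then 1 else 0))"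
definition M0 :: "nat \<Rightarrow> complex mat" where "M0 p = mat (2*p) (2*p) (\<lambda>(k,j). Mf p k j)"
definition B0 :: "nat \<Rightarrow> complex mat" where "B0 p = - (Jmat p * M0 p)"
definition A0 :: "nat \<Rightarrow> complex mat" where
  "A0 p = mat (2*p) (2*p) (\<lambda>(i,j). if i < p \<and> j = i + p then - (of_nat i + 1)
        else if p \<le> i \<and> i = j + p then of_nat j + 1 else 0)"
definition md :: "nat \<Rightarrow> nat \<Rightarrow> nat" where "md p i = (if i < p then i else i - p)"
definition dl :: "nat \<Rightarrow> nat \<Rightarrow> complex" where "dl p i = of_nat (md p i) + 1"
definition Dm :: "nat \<Rightarrow> complex mat" where "Dm p = mat (2*p) (2*p) (\<lambda>(i,j). if i = j then dl p i else 0)"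

lemma M0_carrier[simp]: "M0 p \<in> carrier_mat (2*p) (2*p)" by (simp add: M0_def)
lemma B0_carrier[simp]: "B0 p \<in> carrier_mat (2*p) (2*p)" unfolding B0_def by (rule uminus_carrier_mat, rule mult_carrier_mat[OF Jmat_carrier M0_carrier])
lemma A0_carrier[simp]: "A0 p \<in> carrier_mat (2*p) (2*p)" by (simp add: A0_def)
lemma Dm_carrier[simp]: "Dm p \<in> carrier_mat (2*p) (2*p)" by (simp add: Dm_def)

lemma dims0[simp]: "dim_row (M0 p) = 2*p" "dim_col (M0 p) = 2*p" "dim_row (B0 p) = 2*p" "dim_col (B0 p) = 2*p"
  "dim_row (A0 p) = 2*p" "dim_col (A0 p) = 2*p" "dim_row (Dm p) = 2*p" "dim_col (Dm p) = 2*p"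
  by (simp_all add: M0_def B0_def A0_def Dm_def)

lemma M0_entry: "i < 2*p \<Longrightarrow> j < 2*p \<Longrightarrow> M0 p $$ (i,j) = Mf p i j" by (simp add: M0_def)
lemma A0_entry: "i < 2*p \<Longrightarrow> j < 2*p \<Longrightarrow> A0 p $$ (i,j) = (if i < p \<and> j = i + p then - (of_nat i + 1)
        else if p \<le> i \<and> i = j + p then of_nat j + 1 else 0)" by (simp add: A0_def)
lemma Dm_entry: "i < 2*p \<Longrightarrow> j < 2*p \<Longrightarrow> Dm p $$ (i,j) = (if i = j then dl p i else 0)" by (simp add: Dm_def)

lemma B0_entry: assumes "i < 2*p" "j < 2*p"
  shows "B0 p $$ (i,j) = (if i < p then - Mf p (i+p) j else Mf p (i-p) j)"
proof -
  have "B0 p $$ (i,j) = - ((Jmat p * M0 p) $$ (i,j))" using assms by (simp add: B0_def)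
  also have "\<dots> = (if i < p then - Mf p (i+p) j else Mf p (i-p) j)"
    using assms by (simp del: index_mult_mat(1) add: JU[OF M0_carrier] M0_entry)
  finally show ?thesis .
qed

lemma JB0: "Jmat p * B0 p = M0 p"
  by (rule eq_matI) (auto simp del: index_mult_mat(1) simp: JU[OF B0_carrier] B0_entry M0_entry)

lemma B0J: "B0 p * Jmat p = transpose_mat (M0 p)"
  by (rule eq_matI) (auto simp del: index_mult_mat(1) simp: UJ[OF B0_carrier] B0_entry M0_entry Mf_def G0f_def)

lemma B0_skew: "B0 p \<in> skew_mats (2*p)"
  unfolding skew_mats_def
  by (auto intro!: eq_matI simp: B0_entry Mf_def G0f_def nx_def)

lemma A0_skew: "A0 p \<in> skew_mats (2*p)"
  unfolding skew_mats_def
  by (auto intro!: eq_matI simp: A0_def)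

lemma A0J: "A0 p * Jmat p = Dm p"
  by (rule eq_matI) (auto simp del: index_mult_mat(1) simp: UJ[OF A0_carrier] A0_entry Dm_entry dl_def md_def)

lemma JA0: "Jmat p * A0 p = Dm p"
  by (rule eq_matI) (auto simp del: index_mult_mat(1) simp: JU[OF A0_carrier] A0_entry Dm_entry dl_def md_def)


lemma beta_B0: assumes "X \<in> carrier_mat (2*p) (2*p)" shows "beta p X (B0 p) = X * M0 p - transpose_mat (M0 p) * X"
proof -
  have "X * Jmat p * B0 p = X * M0 p"
    using assoc_mult_mat[OF assms Jmat_carrier B0_carrier] JB0 by simp
  thus ?thesis unfolding beta_def B0J by simp
qed

lemma beta_A0: assumes "Y \<in> carrier_mat (2*p) (2*p)" shows "beta p (A0 p) Y = Dm p * Y - Y * Dm p"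
proof -
  have "Y * Jmat p * A0 p = Y * Dm p"
    using assoc_mult_mat[OF assms Jmat_carrier A0_carrier] JA0 by simp
  thus ?thesis unfolding beta_def A0J by simp
qed

lemma nxpv:
  assumes "4 \<le> p" "i < p"
  shows "nx p i < p" "pv p i < p" "pv p (nx p i) = i" "nx p (pv p i) = i" "nx p (nx p i) \<noteq> i"
    "pv p (pv p i) \<noteq> i" "nx p i \<noteq> i" "pv p i \<noteq> i"
  using assms by (auto simp: nx_def pv_def)

lemma pv_consts: assumes "4 \<le> p" shows "pv p 2 = 1" "pv p 0 = p - 1" "p - 1 \<noteq> 2" "p - 1 \<noteq> 0"
  using assms by (auto simp: pv_def)

lemma colM_low:
  assumes "4 \<le> p" "i < p"
  shows "(\<Sum>k<2*p. h k * Mf p k i) = h (nx p i) + (if i = 2 then h p else 0) - (if i = 0 then h (2+p) else 0)"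
proof -
  have "(\<Sum>k<2*p. h k * Mf p k i) = (\<Sum>k<p. h k * Mf p k i) + (\<Sum>k<p. h (k+p) * Mf p (k+p) i)"
    by (rule sum_split2)
  also have "(\<Sum>k<p. h k * Mf p k i) = (\<Sum>k<p. if k = nx p i then h k else 0)"
    using assms by (intro sum.cong) (auto simp: Mf_def)
  also have "\<dots> = h (nx p i)" using nxpv[OF assms] by (simp add: sum.delta')
  also have "(\<Sum>k<p. h (k+p) * Mf p (k+p) i) = (\<Sum>k<p. (if k = 0 then (if i = 2 then h p else 0) else 0) - (if k = 2 then (if i = 0 then h (2+p) else 0) else 0))"
    using assms by (intro sum.cong) (auto simp: Mf_def G0f_def)
  also have "\<dots> = (if i = 2 then h p else 0) - (if i = 0 then h (2+p) else 0)"
    using assms by (simp add: sum_subtractf sum.delta')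
  finally show ?thesis by simp
qed

lemma colM_high:
  assumes "4 \<le> p" "i < p"
  shows "(\<Sum>k<2*p. h k * Mf p k (i+p)) = h (pv p i + p)"
proof -
  have "(\<Sum>k<2*p. h k * Mf p k (i+p)) = (\<Sum>k<p. h k * Mf p k (i+p)) + (\<Sum>k<p. h (k+p) * Mf p (k+p) (i+p))"
    by (rule sum_split2)
  also have "(\<Sum>k<p. h k * Mf p k (i+p)) = 0"
    using assms by (intro sum.neutral) (auto simp: Mf_def)
  also have "(\<Sum>k<p. h (k+p) * Mf p (k+p) (i+p)) = (\<Sum>k<p. if k = pv p i then h (k+p) else 0)"
    using assms nxpv[OF assms] by (intro sum.cong) (auto simp: Mf_def nx_def pv_def)
  also have "\<dots> = h (pv p i + p)" using nxpv[OF assms] by (simp add: sum.delta')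
  finally show ?thesis by simp
qed


definition zz :: "nat \<Rightarrow> complex mat \<Rightarrow> complex" where "zz p S = (\<Sum>i<p. S$$(i,i+p)) / 2"
definition oq :: "nat \<Rightarrow> complex mat \<Rightarrow> nat \<Rightarrow> complex" where
  "oq p S i = S$$(i,i+p) - zz p S * ((if i=0 then 1 else 0) + (if i=2 then 1 else 0))"
definition ww :: "nat \<Rightarrow> complex mat \<Rightarrow> nat \<Rightarrow> complex" where "ww p S k = - (\<Sum>m<k. oq p S m)"
definition Xf :: "nat \<Rightarrow> complex mat \<Rightarrow> nat \<Rightarrow> nat \<Rightarrow> complex" where
 "Xf p S i j =
 (if i < p then (if j < p then (if j = nx p i then S$$(i,i)/2 else 0) - (if i = nx p j then S$$(j,j)/2 else 0)
                 else (if j - p = pv p i then ww p S i else 0))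
  else (if j < p then - (if i - p = pv p j then ww p S j else 0)
        else (if j-p = pv p (i-p) then S$$(i,i)/2 else 0) - (if i-p = pv p (j-p) then S$$(j,j)/2 else 0)
             + zz p S * ((if i-p = 2 \<and> j-p = 0 then 1 else 0) - (if i-p = 0 \<and> j-p = 2 then 1 else 0))))"
definition Xs :: "nat \<Rightarrow> complex mat \<Rightarrow> complex mat" where "Xs p S = mat (2*p) (2*p) (\<lambda>(i,j). Xf p S i j)"

lemma Xs_carrier[simp]: "Xs p S \<in> carrier_mat (2*p) (2*p)" by (simp add: Xs_def)
lemma Xs_dim[simp]: "dim_row (Xs p S) = 2*p" "dim_col (Xs p S) = 2*p" by (simp_all add: Xs_def)
lemma Xs_entry: "i < 2*p \<Longrightarrow> j < 2*p \<Longrightarrow> Xs p S $$ (i,j) = Xf p S i j" by (simp add: Xs_def)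

lemma Xs_skew: assumes "4 \<le> p" shows "Xs p S \<in> skew_mats (2*p)"
  unfolding skew_mats_def using assms
  by (auto intro!: eq_matI simp: Xs_entry Xf_def)

lemma oq_sum: assumes "4 \<le> p" shows "(\<Sum>m<p. oq p S m) = 0"
proof -
  have e0: "(\<Sum>m<p. (if m=0 then 1 else 0::complex)) = 1" using assms by (simp add: sum.delta)
  have e2: "(\<Sum>m<p. (if m=2 then 1 else 0::complex)) = 1" using assms by (simp add: sum.delta)
  have "(\<Sum>m<p. oq p S m) = (\<Sum>i<p. S$$(i,i+p)) - zz p S * ((\<Sum>m<p. (if m=0 then 1 else 0)) + (\<Sum>m<p. (if m=2 then 1 else 0)))"
    unfolding oq_def sum_subtractf sum_distrib_left[symmetric] sum.distrib by simp
  also have "\<dots> = 0" unfolding e0 e2 by (simp add: zz_def)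
  finally show ?thesis .
qed

lemma ww_step: assumes "4 \<le> p" "i < p" shows "ww p S i - ww p S (nx p i) = oq p S i"
proof (cases "Suc i < p")
  case True thus ?thesis by (simp add: ww_def nx_def)
next
  case False
  hence i: "i = p - 1" "nx p i = 0" using assms by (auto simp: nx_def)
  have "(\<Sum>m<p. oq p S m) = (\<Sum>m<p-1. oq p S m) + oq p S (p-1)"
    using assms sum.lessThan_Suc[of "oq p S" "p-1"] by simp
  hence "- (\<Sum>m<p-1. oq p S m) = oq p S (p-1)" using oq_sum[OF assms(1), of S] by (metis minus_unique)
  thus ?thesis using i by (simp add: ww_def)
qed

lemma LB_entry: assumes "X \<in> carrier_mat (2*p) (2*p)" "i < 2*p" "j < 2*p"
  shows "beta p X (B0 p) $$ (i,j) = (\<Sum>k<2*p. X $$ (i,k) * Mf p k j) - (\<Sum>k<2*p. X $$ (k,j) * Mf p k i)"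
proof -
  have "beta p X (B0 p) $$ (i,j) = (X * M0 p) $$ (i,j) - (transpose_mat (M0 p) * X) $$ (i,j)"
    using assms by (simp add: beta_B0)
  also have "\<dots> = (\<Sum>k<2*p. X $$ (i,k) * Mf p k j) - (\<Sum>k<2*p. X $$ (k,j) * Mf p k i)"
    using assms by (simp del: index_mult_mat(1) add: mult_entry[OF assms(1) M0_carrier] mult_entry[OF transpose_carrier_mat[THEN iffD2, OF M0_carrier] assms(1)] M0_entry mult.commute)
  finally show ?thesis .
qed

lemma LB_top: assumes "4 \<le> p" "i < p"
  shows "beta p (Xs p S) (B0 p) $$ (i,i) = S $$ (i,i)"
  using assms nxpv[OF assms] pv_consts[OF assms(1)]
  by (simp add: LB_entry colM_low Xs_entry Xf_def)

lemma LB_bot: assumes "4 \<le> p" "i < p"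
  shows "beta p (Xs p S) (B0 p) $$ (i+p,i+p) = S $$ (i+p,i+p)"
  using assms nxpv[OF assms] pv_consts[OF assms(1)]
  by (simp add: LB_entry colM_high Xs_entry Xf_def) (auto)

lemma LB_off: assumes "4 \<le> p" "i < p"
  shows "beta p (Xs p S) (B0 p) $$ (i,i+p) = S $$ (i,i+p)"
  using assms nxpv[OF assms] pv_consts[OF assms(1)] ww_step[OF assms, of S]
  by (simp add: LB_entry colM_high colM_low Xs_entry Xf_def oq_def) (auto simp: algebra_simps)


lemma Jt: "transpose_mat (Jmat p) = - Jmat p"
proof (rule eq_matI)
  fix i j assume "i < dim_row (- Jmat p)" "j < dim_col (- Jmat p)"
  hence ij: "i < 2*p" "j < 2*p" by auto
  show "transpose_mat (Jmat p) $$ (i, j) = (- Jmat p) $$ (i, j)"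
    using ij by (simp add: Jentry)
qed auto

lemma neg_sub: "P \<in> carrier_mat n m \<Longrightarrow> Q \<in> carrier_mat n m \<Longrightarrow> -Q - -P = P - (Q :: 'a::ab_group_add mat)"
  by (intro eq_matI) auto

lemma neg3: fixes B J X :: "'a::ring mat"
  assumes "B \<in> carrier_mat n n" "J \<in> carrier_mat n n" "X \<in> carrier_mat n n"
  shows "(-B) * ((-J) * (-X)) = -(B*(J*X))"
proof -
  have "(-J) * (-X) = J * X" using assms by simp
  moreover have "(-B) * (J * X) = -(B*(J*X))" using assms by simp
  ultimately show ?thesis by simp
qed

lemma skewD: "X \<in> skew_mats n \<Longrightarrow> X \<in> carrier_mat n n \<and> transpose_mat X = - X"
  by (simp add: skew_mats_def)

lemma tr3: assumes "X \<in> skew_mats (2*p)" "B \<in> skew_mats (2*p)"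
  shows "transpose_mat (X * Jmat p * B) = - (B * Jmat p * X)"
proof -
  have X: "X \<in> carrier_mat (2*p) (2*p)" "transpose_mat X = - X" using skewD[OF assms(1)] by auto
  have B: "B \<in> carrier_mat (2*p) (2*p)" "transpose_mat B = - B" using skewD[OF assms(2)] by auto
  have "transpose_mat (X * Jmat p * B) = transpose_mat B * transpose_mat (X * Jmat p)"
    by (rule transpose_mult[OF mult_carrier_mat[OF X(1) Jmat_carrier] B(1)])
  also have "transpose_mat (X * Jmat p) = transpose_mat (Jmat p) * transpose_mat X"
    by (rule transpose_mult[OF X(1) Jmat_carrier])
  also have "transpose_mat B * (transpose_mat (Jmat p) * transpose_mat X) = - (B * (Jmat p * X))"
    unfolding X(2) B(2) Jt by (rule neg3[OF B(1) Jmat_carrier X(1)])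
  also have "B * (Jmat p * X) = B * Jmat p * X"
    by (rule assoc_mult_mat[symmetric, OF B(1) Jmat_carrier X(1)])
  finally show ?thesis .
qed

lemma beta_carrier: "X \<in> carrier_mat (2*p) (2*p) \<Longrightarrow> B \<in> carrier_mat (2*p) (2*p) \<Longrightarrow> beta p X B \<in> carrier_mat (2*p) (2*p)"
  unfolding beta_def by (auto intro!: minus_carrier_mat mult_carrier_mat[of _ _ "2*p"])

lemma beta_sym: assumes "X \<in> skew_mats (2*p)" "B \<in> skew_mats (2*p)"
  shows "transpose_mat (beta p X B) = beta p X B"
proof -
  have X: "X \<in> carrier_mat (2*p) (2*p)" using skewD[OF assms(1)] by auto
  have B: "B \<in> carrier_mat (2*p) (2*p)" using skewD[OF assms(2)] by auto
  have c1: "X * Jmat p * B \<in> carrier_mat (2*p) (2*p)" using X B by (auto intro!: mult_carrier_mat[of _ _ "2*p"])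
  have c2: "B * Jmat p * X \<in> carrier_mat (2*p) (2*p)" using X B by (auto intro!: mult_carrier_mat[of _ _ "2*p"])
  have "transpose_mat (beta p X B) = transpose_mat (X * Jmat p * B) - transpose_mat (B * Jmat p * X)"
    unfolding beta_def by (rule transpose_minus[OF c1 c2])
  also have "\<dots> = - (B * Jmat p * X) - - (X * Jmat p * B)"
    using tr3[OF assms] tr3[OF assms(2,1)] by simp
  also have "\<dots> = beta p X B"
    unfolding beta_def by (rule neg_sub[OF c1 c2])
  finally show ?thesis .
qed

lemma beta_sym_entry: assumes "X \<in> skew_mats (2*p)" "B \<in> skew_mats (2*p)" "i < 2*p" "j < 2*p"
  shows "beta p X B $$ (j,i) = beta p X B $$ (i,j)"
proof -
  have c: "beta p X B \<in> carrier_mat (2*p) (2*p)" using skewD[OF assms(1)] skewD[OF assms(2)] beta_carrier by blast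
  have "beta p X B $$ (j,i) = transpose_mat (beta p X B) $$ (i,j)" using c assms by simp
  thus ?thesis using beta_sym[OF assms(1,2)] by simp
qed

lemma sym_entry: assumes "S \<in> sym_mats n" "i < n" "j < n" shows "S $$ (j,i) = S $$ (i,j)"
proof -
  have "S \<in> carrier_mat n n" "transpose_mat S = S" using assms(1) by (auto simp: sym_mats_def)
  hence d: "dim_row S = n" "dim_col S = n" by auto
  have "transpose_mat S $$ (i,j) = S $$ (j,i)" using d assms(2,3) by simp
  thus ?thesis using \<open>transpose_mat S = S\<close> by simp
qed

definition Ys :: "nat \<Rightarrow> complex mat \<Rightarrow> complex mat" where
  "Ys p S = mat (2*p) (2*p) (\<lambda>(i,j). if dl p i = dl p j then 0
      else (S$$(i,j) - beta p (Xs p S) (B0 p) $$ (i,j)) / (dl p i - dl p j))"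

lemma Ys_carrier[simp]: "Ys p S \<in> carrier_mat (2*p) (2*p)" by (simp add: Ys_def)
lemma Ys_dim[simp]: "dim_row (Ys p S) = 2*p" "dim_col (Ys p S) = 2*p" by (simp_all add: Ys_def)
lemma Ys_entry: "i < 2*p \<Longrightarrow> j < 2*p \<Longrightarrow> Ys p S $$ (i,j) = (if dl p i = dl p j then 0
      else (S$$(i,j) - beta p (Xs p S) (B0 p) $$ (i,j)) / (dl p i - dl p j))" by (simp add: Ys_def)

lemma Ys_skew: assumes "4 \<le> p" "S \<in> sym_mats (2*p)" shows "Ys p S \<in> skew_mats (2*p)"
proof -
  have S: "\<And>i j. i < 2*p \<Longrightarrow> j < 2*p \<Longrightarrow> S $$ (j,i) = S $$ (i,j)"
    by (rule sym_entry[OF assms(2)])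
  have L: "\<And>i j. i < 2*p \<Longrightarrow> j < 2*p \<Longrightarrow> beta p (Xs p S) (B0 p) $$ (j,i) = beta p (Xs p S) (B0 p) $$ (i,j)"
    using beta_sym_entry[OF Xs_skew[OF assms(1)] B0_skew] by blast
  show ?thesis unfolding skew_mats_def
  proof (intro CollectI conjI)
    show "transpose_mat (Ys p S) = - Ys p S"
    proof (rule eq_matI)
      fix i j assume ij: "i < dim_row (- Ys p S)" "j < dim_col (- Ys p S)"
      hence ij': "i < 2*p" "j < 2*p" by auto
      show "transpose_mat (Ys p S) $$ (i, j) = (- Ys p S) $$ (i, j)"
      proof -
        have e: "dl p j - dl p i = - (dl p i - dl p j)" by simp
        have "transpose_mat (Ys p S) $$ (i, j) = Ys p S $$ (j,i)" using ij' by simp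
        also have "\<dots> = - Ys p S $$ (i,j)"
          unfolding Ys_entry[OF ij'(2,1)] Ys_entry[OF ij'] S[OF ij'] L[OF ij'] e divide_minus_right
          by (simp add: eq_commute[of "dl p j" "dl p i"])
        also have "\<dots> = (- Ys p S) $$ (i, j)" using ij' by simp
        finally show ?thesis .
      qed
    qed auto
  qed simp
qed

lemma dl_eq: assumes "i < 2*p" "j < 2*p" "dl p i = dl p j"
  shows "i = j \<or> j = i + p \<or> i = j + p"
proof -
  have "md p i = md p j" using assms(3) by (simp add: dl_def)
  thus ?thesis using assms(1,2) by (auto simp: md_def split: if_splits)
qed

lemma DmY1: "x \<in> {..<2*p} \<Longrightarrow> i < 2*p \<Longrightarrow> Dm p $$ (i, x) * Y $$ (x, j) = (if x = i then dl p i * Y $$ (x, j) else 0)"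
  by (simp add: Dm_entry)
lemma DmY2: "x \<in> {..<2*p} \<Longrightarrow> j < 2*p \<Longrightarrow> Y $$ (i, x) * Dm p $$ (x, j) = (if x = j then dl p j * Y $$ (i, x) else 0)"
  by (simp add: Dm_entry)

lemma DY_entry: assumes "Y \<in> carrier_mat (2*p) (2*p)" "i < 2*p" "j < 2*p"
  shows "(Dm p * Y - Y * Dm p) $$ (i,j) = (dl p i - dl p j) * Y $$ (i,j)"
proof -
  have "(Dm p * Y) $$ (i,j) = (\<Sum>k<2*p. Dm p $$ (i,k) * Y $$ (k,j))" by (rule mult_entry[OF Dm_carrier assms])
  also have "\<dots> = (\<Sum>k<2*p. (if k = i then dl p i * Y $$ (k,j) else 0))"
    by (rule sum.cong[OF refl DmY1[OF _ assms(2)]])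
  also have "\<dots> = dl p i * Y $$ (i,j)" using assms by simp
  finally have 1: "(Dm p * Y) $$ (i,j) = dl p i * Y $$ (i,j)" .
  have "(Y * Dm p) $$ (i,j) = (\<Sum>k<2*p. Y $$ (i,k) * Dm p $$ (k,j))" by (rule mult_entry[OF assms(1) Dm_carrier assms(2,3)])
  also have "\<dots> = (\<Sum>k<2*p. (if k = j then dl p j * Y $$ (i,k) else 0))"
    by (rule sum.cong[OF refl DmY2[OF _ assms(3)]])
  also have "\<dots> = dl p j * Y $$ (i,j)" using assms by simp
  finally have 2: "(Y * Dm p) $$ (i,j) = dl p j * Y $$ (i,j)" .
  have "(Dm p * Y - Y * Dm p) $$ (i,j) = (Dm p * Y) $$ (i,j) - (Y * Dm p) $$ (i,j)"
    using assms by (simp del: index_mult_mat(1))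
  also have "\<dots> = dl p i * Y $$ (i,j) - dl p j * Y $$ (i,j)" unfolding 1 2 ..
  also have "\<dots> = (dl p i - dl p j) * Y $$ (i,j)" by (rule left_diff_distrib[symmetric])
  finally show ?thesis .
qed


lemma surj_point: assumes "4 \<le> p" shows "dbeta_surjective p (A0 p) (B0 p)"
  unfolding dbeta_surjective_def
proof (intro ballI)
  fix S assume S: "S \<in> sym_mats (2*p)"
  have Sc: "S \<in> carrier_mat (2*p) (2*p)" using S by (simp add: sym_mats_def)
  have Ss: "\<And>i j. i < 2*p \<Longrightarrow> j < 2*p \<Longrightarrow> S $$ (j,i) = S $$ (i,j)"
    by (rule sym_entry[OF S])
  let ?L = "beta p (Xs p S) (B0 p)"
  have L: "\<And>i j. i < 2*p \<Longrightarrow> j < 2*p \<Longrightarrow> ?L $$ (j,i) = ?L $$ (i,j)"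
    using beta_sym_entry[OF Xs_skew[OF assms(1)] B0_skew] by blast
  have Lc: "?L \<in> carrier_mat (2*p) (2*p)" by (rule beta_carrier) auto
  have xs: "Xs p S \<in> skew_mats (2*p)" by (rule Xs_skew[OF assms])
  have ys: "Ys p S \<in> skew_mats (2*p)" by (rule Ys_skew[OF assms S])
  have dc: "dbeta p (A0 p) (B0 p) (Xs p S) (Ys p S) \<in> carrier_mat (2*p) (2*p)"
    unfolding dbeta_def by (intro add_carrier_mat beta_carrier) auto
  have "dbeta p (A0 p) (B0 p) (Xs p S) (Ys p S) = S"
  proof (rule eq_matI)
    fix i j assume "i < dim_row S" "j < dim_col S"
    hence ij: "i < 2*p" "j < 2*p" using Sc by auto
    have "dbeta p (A0 p) (B0 p) (Xs p S) (Ys p S) $$ (i,j) = ?L $$ (i,j) + (dl p i - dl p j) * Ys p S $$ (i,j)"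
      unfolding dbeta_def beta_A0[OF Ys_carrier] using ij Lc
      using DY_entry[OF Ys_carrier ij] by (simp del: index_mult_mat(1) index_minus_mat(1))
    also have "\<dots> = S $$ (i,j)"
    proof (cases "dl p i = dl p j")
      case False thus ?thesis using ij by (simp add: Ys_entry)
    next
      case True
      then consider "i = j" "i < p" | "i = j" "p \<le> i" | "j = i + p" | "i = j + p"
        using dl_eq[OF ij True] by linarith
      thus ?thesis
      proof cases
        case 1 thus ?thesis using LB_top[OF assms 1(2)] by simp
      next
        case 2 thus ?thesis using LB_bot[OF assms, of "i - p" S] ij by simp
      next
        case 3 thus ?thesis using LB_off[OF assms, of i S] ij True by simp
      next
        case 4 thus ?thesis using LB_off[OF assms, of j S] ij L[OF ij] Ss[OF ij] True by simp
      qed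
    qed
    finally show "dbeta p (A0 p) (B0 p) (Xs p S) (Ys p S) $$ (i,j) = S $$ (i,j)" .
  next
    show "dim_row (dbeta p (A0 p) (B0 p) (Xs p S) (Ys p S)) = dim_row S" using dc Sc by auto
  next
    show "dim_col (dbeta p (A0 p) (B0 p) (Xs p S) (Ys p S)) = dim_col S" using dc Sc by auto
  qed
  thus "\<exists>X\<in>skew_mats (2 * p). \<exists>Y\<in>skew_mats (2 * p). dbeta p (A0 p) (B0 p) X Y = S" using xs ys by blast
qed


lemma pf2_sum: "finite S \<Longrightarrow> (\<And>x. x \<in> S \<Longrightarrow> poly_fun2 n (f x)) \<Longrightarrow> poly_fun2 n (\<lambda>z. \<Sum>x\<in>S. f x z)"
proof (induction S rule: finite_induct)
  case empty thus ?case using poly_fun2.const2[of n 0] by simp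
next
  case (insert a F)
  have "poly_fun2 n (\<lambda>z. f a z + (\<Sum>x\<in>F. f x z))"
    using insert by (intro poly_fun2.add2) auto
  thus ?case using insert by simp
qed

lemma pf2_prod: "finite S \<Longrightarrow> (\<And>x. x \<in> S \<Longrightarrow> poly_fun2 n (f x)) \<Longrightarrow> poly_fun2 n (\<lambda>z. \<Prod>x\<in>S. f x z)"
proof (induction S rule: finite_induct)
  case empty thus ?case using poly_fun2.const2[of n 1] by simp
next
  case (insert a F)
  have "poly_fun2 n (\<lambda>z. f a z * (\<Prod>x\<in>F. f x z))"
    using insert by (intro poly_fun2.mult2) auto
  thus ?case using insert by simp
qed

lemma pf2_cmult: "poly_fun2 n f \<Longrightarrow> poly_fun2 n (\<lambda>z. c * f z)"
  using poly_fun2.mult2[OF poly_fun2.const2[of n c]] by blast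

lemma pf2_diff: "poly_fun2 n f \<Longrightarrow> poly_fun2 n g \<Longrightarrow> poly_fun2 n (\<lambda>z. f z - g z)"
proof -
  assume "poly_fun2 n f" "poly_fun2 n g"
  hence "poly_fun2 n (\<lambda>z. f z + (-1) * g z)" by (intro poly_fun2.add2 pf2_cmult)
  thus ?thesis by simp
qed

lemma pf2_if: "poly_fun2 n f \<Longrightarrow> poly_fun2 n (\<lambda>z. if P then f z else 0)"
  by (cases P) (auto intro: poly_fun2.const2)

definition polymat :: "nat \<Rightarrow> (complex mat \<times> complex mat \<Rightarrow> complex mat) \<Rightarrow> bool" where
  "polymat n F \<longleftrightarrow> (\<forall>z. F z \<in> carrier_mat n n) \<and> (\<forall>i<n. \<forall>j<n. poly_fun2 n (\<lambda>z. F z $$ (i,j)))"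

lemma polymat_const: "C \<in> carrier_mat n n \<Longrightarrow> polymat n (\<lambda>z. C)"
  unfolding polymat_def by (auto intro: poly_fun2.const2)

lemma polymat_mult: assumes "polymat n F" "polymat n G" shows "polymat n (\<lambda>z. F z * G z)"
  unfolding polymat_def
proof (intro conjI allI impI)
  fix z show "F z * G z \<in> carrier_mat n n" using assms unfolding polymat_def by (meson mult_carrier_mat)
next
  fix i j assume ij: "i < n" "j < n"
  have "poly_fun2 n (\<lambda>z. \<Sum>k<n. F z $$ (i,k) * G z $$ (k,j))"
    using assms ij unfolding polymat_def by (intro pf2_sum poly_fun2.mult2) auto
  moreover have "\<And>z. (F z * G z) $$ (i,j) = (\<Sum>k<n. F z $$ (i,k) * G z $$ (k,j))"
    using assms ij unfolding polymat_def by (intro mult_entry) auto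
  ultimately show "poly_fun2 n (\<lambda>z. (F z * G z) $$ (i, j))" by simp
qed

lemma polymat_minus: assumes "polymat n F" "polymat n G" shows "polymat n (\<lambda>z. F z - G z)"
  unfolding polymat_def
proof (intro conjI allI impI)
  fix z show "F z - G z \<in> carrier_mat n n" using assms unfolding polymat_def by (meson minus_carrier_mat)
next
  fix i j assume ij: "i < n" "j < n"
  have "poly_fun2 n (\<lambda>z. F z $$ (i,j) - G z $$ (i,j))"
    using assms ij unfolding polymat_def by (intro pf2_diff) auto
  moreover have "\<And>z. (F z - G z) $$ (i,j) = F z $$ (i,j) - G z $$ (i,j)"
    using assms ij unfolding polymat_def by (metis carrier_matD index_minus_mat(1))
  ultimately show "poly_fun2 n (\<lambda>z. (F z - G z) $$ (i, j))" by simp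
qed

lemma polymat_plus: assumes "polymat n F" "polymat n G" shows "polymat n (\<lambda>z. F z + G z)"
  unfolding polymat_def
proof (intro conjI allI impI)
  fix z show "F z + G z \<in> carrier_mat n n" using assms unfolding polymat_def by (meson add_carrier_mat)
next
  fix i j assume ij: "i < n" "j < n"
  have "poly_fun2 n (\<lambda>z. F z $$ (i,j) + G z $$ (i,j))"
    using assms ij unfolding polymat_def by (intro poly_fun2.add2) auto
  moreover have "\<And>z. (F z + G z) $$ (i,j) = F z $$ (i,j) + G z $$ (i,j)"
    using assms ij unfolding polymat_def by (metis carrier_matD index_add_mat(1))
  ultimately show "poly_fun2 n (\<lambda>z. (F z + G z) $$ (i, j))" by simp
qed

definition fstc :: "nat \<Rightarrow> complex mat \<times> complex mat \<Rightarrow> complex mat" where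
  "fstc n z = mat n n (\<lambda>(i,j). fst z $$ (i,j))"
definition sndc :: "nat \<Rightarrow> complex mat \<times> complex mat \<Rightarrow> complex mat" where
  "sndc n z = mat n n (\<lambda>(i,j). snd z $$ (i,j))"

lemma polymat_fst: "polymat n (fstc n)"
  unfolding polymat_def fstc_def
proof (intro conjI allI impI)
  fix i j assume "i < n" "j < n"
  thus "poly_fun2 n (\<lambda>z. mat n n (\<lambda>(i, j). fst z $$ (i, j)) $$ (i, j))"
    using poly_fun2.fst2[of i n j] by (simp add: case_prod_unfold)
qed auto

lemma polymat_snd: "polymat n (sndc n)"
  unfolding polymat_def sndc_def
proof (intro conjI allI impI)
  fix i j assume "i < n" "j < n"
  thus "poly_fun2 n (\<lambda>z. mat n n (\<lambda>(i, j). snd z $$ (i, j)) $$ (i, j))"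
    using poly_fun2.snd2[of i n j] by (simp add: case_prod_unfold)
qed auto

lemma fstc_eq: "A \<in> carrier_mat n n \<Longrightarrow> fstc n (A,B) = A"
  unfolding fstc_def by (auto intro!: eq_matI)
lemma sndc_eq: "B \<in> carrier_mat n n \<Longrightarrow> sndc n (A,B) = B"
  unfolding sndc_def by (auto intro!: eq_matI)


definition Eb :: "nat \<Rightarrow> nat \<Rightarrow> nat \<Rightarrow> complex mat" where
  "Eb n a b = mat n n (\<lambda>(i,j). (if i = a \<and> j = b then 1 else 0) - (if i = b \<and> j = a then 1 else 0))"
definition Cs :: "nat \<Rightarrow> (bool \<times> nat \<times> nat) set" where "Cs n = UNIV \<times> ({..<n} \<times> {..<n})"
definition bX :: "nat \<Rightarrow> bool \<times> nat \<times> nat \<Rightarrow> complex mat" where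
  "bX n c = (if fst c then 0\<^sub>m n n else Eb n (fst (snd c)) (snd (snd c)))"
definition bY :: "nat \<Rightarrow> bool \<times> nat \<times> nat \<Rightarrow> complex mat" where
  "bY n c = (if fst c then Eb n (fst (snd c)) (snd (snd c)) else 0\<^sub>m n n)"
definition upr :: "nat \<Rightarrow> nat \<Rightarrow> bool" where "upr n r \<longleftrightarrow> r div n \<le> r mod n"
definition Jc :: "nat \<Rightarrow> complex mat \<times> complex mat \<Rightarrow> nat \<Rightarrow> bool \<times> nat \<times> nat \<Rightarrow> complex" where
  "Jc p z r c = (if upr (2*p) r then dbeta p (fstc (2*p) z) (sndc (2*p) z) (bX (2*p) c) (bY (2*p) c) $$ (r div (2*p), r mod (2*p)) else 0)"
definition Gm :: "nat \<Rightarrow> complex mat \<times> complex mat \<Rightarrow> complex mat" where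
  "Gm p z = mat (2*p*(2*p)) (2*p*(2*p)) (\<lambda>(r,r'). (\<Sum>c\<in>Cs (2*p). Jc p z r c * Jc p z r' c) + (if r = r' \<and> \<not> upr (2*p) r then 1 else 0))"
definition fgen :: "nat \<Rightarrow> complex mat \<times> complex mat \<Rightarrow> complex" where "fgen p z = det (Gm p z)"

lemma Cs_finite[simp]: "finite (Cs n)" by (simp add: Cs_def)
lemma Eb_carrier[simp]: "Eb n a b \<in> carrier_mat n n" by (simp add: Eb_def)
lemma bX_carrier[simp]: "bX n c \<in> carrier_mat n n" by (simp add: bX_def)
lemma bY_carrier[simp]: "bY n c \<in> carrier_mat n n" by (simp add: bY_def)
lemma Gm_carrier[simp]: "Gm p z \<in> carrier_mat (2*p*(2*p)) (2*p*(2*p))" by (simp add: Gm_def)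

lemma polymat_beta: assumes "polymat (2*p) F" "polymat (2*p) G"
  shows "polymat (2*p) (\<lambda>z. beta p (F z) (G z))"
  unfolding beta_def
  by (intro polymat_minus polymat_mult polymat_const assms Jmat_carrier)

lemma polymat_dbeta: assumes "X \<in> carrier_mat (2*p) (2*p)" "Y \<in> carrier_mat (2*p) (2*p)"
  shows "polymat (2*p) (\<lambda>z. dbeta p (fstc (2*p) z) (sndc (2*p) z) X Y)"
  unfolding dbeta_def
  by (intro polymat_plus polymat_beta polymat_const assms polymat_fst polymat_snd)

lemma upr_bounds: fixes r p :: nat assumes "r < 2*p*(2*p)" shows "r div (2*p) < 2*p" "r mod (2*p) < 2*p"
proof -
  have p: "0 < 2*p" using assms by (cases p) auto
  show "r div (2*p) < 2*p" using assms by (simp add: less_mult_imp_div_less)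
  show "r mod (2*p) < 2*p" using p by simp
qed

lemma pf_Jc: assumes "r < 2*p*(2*p)" shows "poly_fun2 (2*p) (\<lambda>z. Jc p z r c)"
  unfolding Jc_def
  using polymat_dbeta[OF bX_carrier bY_carrier, of p c] upr_bounds[OF assms]
  unfolding polymat_def by (intro pf2_if) auto

lemma pf_Gm: assumes "r < 2*p*(2*p)" "r' < 2*p*(2*p)"
  shows "poly_fun2 (2*p) (\<lambda>z. Gm p z $$ (r,r'))"
proof -
  have "poly_fun2 (2*p) (\<lambda>z. (\<Sum>c\<in>Cs (2*p). Jc p z r c * Jc p z r' c) + (if r = r' \<and> \<not> upr (2*p) r then 1 else 0))"
    using assms by (intro poly_fun2.add2 pf2_sum poly_fun2.mult2 pf_Jc poly_fun2.const2 Cs_finite)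
  thus ?thesis using assms by (simp add: Gm_def)
qed

lemma pf_fgen: "poly_fun2 (2*p) (fgen p)"
proof -
  let ?N = "2*p*(2*p)"
  have "poly_fun2 (2*p) (\<lambda>z. \<Sum>s\<in>{s. s permutes {0..<?N}}. of_int (sign s) * (\<Prod>i = 0..<?N. Gm p z $$ (i, s i)))"
  proof (intro pf2_sum pf2_cmult pf2_prod)
    show "finite {s. s permutes {0..<?N}}" by (simp add: finite_permutations)
  next
    fix s i assume s: "s \<in> {s. s permutes {0..<?N}}" and i: "i \<in> {0..<?N}"
    have "s i \<in> {0..<?N}" using s i by (simp add: permutes_in_image)
    thus "poly_fun2 (2*p) (\<lambda>z. Gm p z $$ (i, s i))" using i by (intro pf_Gm) auto
  qed simp
  moreover have "fgen p = (\<lambda>z. \<Sum>s\<in>{s. s permutes {0..<?N}}. of_int (sign s) * (\<Prod>i = 0..<?N. Gm p z $$ (i, s i)))"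
    unfolding fgen_def by (rule ext, rule det_def'[OF Gm_carrier])
  ultimately show ?thesis by simp
qed


definition lc :: "nat \<Rightarrow> 'c set \<Rightarrow> ('c \<Rightarrow> complex) \<Rightarrow> ('c \<Rightarrow> complex mat) \<Rightarrow> complex mat" where
  "lc n C u F = mat n n (\<lambda>(i,j). \<Sum>c\<in>C. u c * F c $$ (i,j))"

lemma lc_carrier[simp]: "lc n C u F \<in> carrier_mat n n" by (simp add: lc_def)
lemma lc_dim[simp]: "dim_row (lc n C u F) = n" "dim_col (lc n C u F) = n" by (simp_all add: lc_def)
lemma lc_entry: "i < n \<Longrightarrow> j < n \<Longrightarrow> lc n C u F $$ (i,j) = (\<Sum>c\<in>C. u c * F c $$ (i,j))" by (simp add: lc_def)

lemma lin_left: assumes "U \<in> carrier_mat n n" "\<And>c. F c \<in> carrier_mat n n" "i < n" "j < n"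
  shows "(lc n C u F * U) $$ (i,j) = (\<Sum>c\<in>C. u c * (F c * U) $$ (i,j))"
proof -
  have "(lc n C u F * U) $$ (i,j) = (\<Sum>k<n. lc n C u F $$ (i,k) * U $$ (k,j))"
    by (rule mult_entry[OF lc_carrier assms(1,3,4)])
  also have "\<dots> = (\<Sum>k<n. \<Sum>c\<in>C. u c * (F c $$ (i,k) * U $$ (k,j)))"
    using assms by (intro sum.cong refl) (simp add: lc_entry sum_distrib_right mult.assoc)
  also have "\<dots> = (\<Sum>c\<in>C. u c * (\<Sum>k<n. F c $$ (i,k) * U $$ (k,j)))"
    by (subst sum.swap) (simp add: sum_distrib_left)
  also have "\<dots> = (\<Sum>c\<in>C. u c * (F c * U) $$ (i,j))"
    using assms by (intro sum.cong refl) (simp add: mult_entry[OF assms(2) assms(1,3,4)])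
  finally show ?thesis .
qed

lemma lin_right: assumes "U \<in> carrier_mat n n" "\<And>c. F c \<in> carrier_mat n n" "i < n" "j < n"
  shows "(U * lc n C u F) $$ (i,j) = (\<Sum>c\<in>C. u c * (U * F c) $$ (i,j))"
proof -
  have "(U * lc n C u F) $$ (i,j) = (\<Sum>k<n. U $$ (i,k) * lc n C u F $$ (k,j))"
    by (rule mult_entry[OF assms(1) lc_carrier assms(3,4)])
  also have "\<dots> = (\<Sum>k<n. \<Sum>c\<in>C. u c * (U $$ (i,k) * F c $$ (k,j)))"
    using assms by (intro sum.cong refl) (simp add: lc_entry sum_distrib_left mult.left_commute)
  also have "\<dots> = (\<Sum>c\<in>C. u c * (\<Sum>k<n. U $$ (i,k) * F c $$ (k,j)))"
    by (subst sum.swap) (simp add: sum_distrib_left)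
  also have "\<dots> = (\<Sum>c\<in>C. u c * (U * F c) $$ (i,j))"
    using assms by (intro sum.cong refl) (simp add: mult_entry[OF assms(1) assms(2) assms(3,4)])
  finally show ?thesis .
qed

lemma beta_entry_split: assumes "X \<in> carrier_mat (2*p) (2*p)" "B \<in> carrier_mat (2*p) (2*p)" "i < 2*p" "j < 2*p"
  shows "beta p X B $$ (i,j) = (X * (Jmat p * B)) $$ (i,j) - ((B * Jmat p) * X) $$ (i,j)"
proof -
  have "X * Jmat p * B = X * (Jmat p * B)" by (rule assoc_mult_mat[OF assms(1) Jmat_carrier assms(2)])
  moreover have "B * Jmat p * X \<in> carrier_mat (2*p) (2*p)" using assms by (meson Jmat_carrier mult_carrier_mat)
  ultimately show ?thesis unfolding beta_def using assms by (simp del: index_mult_mat(1))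
qed

lemma beta_entry_split2: assumes "A \<in> carrier_mat (2*p) (2*p)" "Y \<in> carrier_mat (2*p) (2*p)" "i < 2*p" "j < 2*p"
  shows "beta p A Y $$ (i,j) = ((A * Jmat p) * Y) $$ (i,j) - (Y * (Jmat p * A)) $$ (i,j)"
proof -
  have "Y * Jmat p * A = Y * (Jmat p * A)" by (rule assoc_mult_mat[OF assms(2) Jmat_carrier assms(1)])
  moreover have "A * Jmat p * Y \<in> carrier_mat (2*p) (2*p)" using assms by (meson Jmat_carrier mult_carrier_mat)
  ultimately show ?thesis unfolding beta_def using assms by (simp del: index_mult_mat(1))
qed

lemma dbeta_lin: assumes "A \<in> carrier_mat (2*p) (2*p)" "B \<in> carrier_mat (2*p) (2*p)"
  "\<And>c. F c \<in> carrier_mat (2*p) (2*p)" "\<And>c. G c \<in> carrier_mat (2*p) (2*p)" "i < 2*p" "j < 2*p"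
  shows "dbeta p A B (lc (2*p) C u F) (lc (2*p) C u G) $$ (i,j) = (\<Sum>c\<in>C. u c * dbeta p A B (F c) (G c) $$ (i,j))"
proof -
  have JB: "Jmat p * B \<in> carrier_mat (2*p) (2*p)" "B * Jmat p \<in> carrier_mat (2*p) (2*p)"
    "Jmat p * A \<in> carrier_mat (2*p) (2*p)" "A * Jmat p \<in> carrier_mat (2*p) (2*p)"
    using assms by (meson Jmat_carrier mult_carrier_mat)+
  have c1: "beta p (lc (2*p) C u F) B \<in> carrier_mat (2*p) (2*p)" "beta p A (lc (2*p) C u G) \<in> carrier_mat (2*p) (2*p)"
    using assms beta_carrier by auto
  have "dbeta p A B (lc (2*p) C u F) (lc (2*p) C u G) $$ (i,j) = beta p (lc (2*p) C u F) B $$ (i,j) + beta p A (lc (2*p) C u G) $$ (i,j)"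
    unfolding dbeta_def using c1 assms by simp
  also have "\<dots> = (\<Sum>c\<in>C. u c * (F c * (Jmat p * B)) $$ (i,j)) - (\<Sum>c\<in>C. u c * ((B * Jmat p) * F c) $$ (i,j))
     + ((\<Sum>c\<in>C. u c * ((A * Jmat p) * G c) $$ (i,j)) - (\<Sum>c\<in>C. u c * (G c * (Jmat p * A)) $$ (i,j)))"
    unfolding beta_entry_split[OF lc_carrier assms(2,5,6)] beta_entry_split2[OF assms(1) lc_carrier assms(5,6)]
      lin_left[OF JB(1) assms(3,5,6)] lin_right[OF JB(2) assms(3,5,6)]
      lin_left[OF JB(3) assms(4,5,6)] lin_right[OF JB(4) assms(4,5,6)] ..
  also have "\<dots> = (\<Sum>c\<in>C. u c * (beta p (F c) B $$ (i,j) + beta p A (G c) $$ (i,j)))"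
    unfolding beta_entry_split[OF assms(3) assms(2,5,6)] beta_entry_split2[OF assms(1) assms(4) assms(5,6)]
    by (simp add: sum_subtractf[symmetric] sum.distrib[symmetric] algebra_simps)
  also have "\<dots> = (\<Sum>c\<in>C. u c * dbeta p A B (F c) (G c) $$ (i,j))"
  proof (intro sum.cong refl)
    fix c
    have "beta p (F c) B \<in> carrier_mat (2*p) (2*p)" "beta p A (G c) \<in> carrier_mat (2*p) (2*p)"
      using assms beta_carrier by auto
    thus "u c * (beta p (F c) B $$ (i,j) + beta p A (G c) $$ (i,j)) = u c * dbeta p A B (F c) (G c) $$ (i,j)"
      using assms unfolding dbeta_def by simp
  qed
  finally show ?thesis .
qed


lemma mult_vec_entry: assumes "A \<in> carrier_mat n n" "v \<in> carrier_vec n" "r < n"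
  shows "(A *\<^sub>v v) $ r = (\<Sum>k<n. A $$ (r,k) * v $ k)"
  using assms by (simp add: scalar_prod_def lessThan_atLeast0 mult.commute)

lemma Eb_dim[simp]: "dim_row (Eb n a b) = n" "dim_col (Eb n a b) = n" by (simp_all add: Eb_def)
lemma Eb_entry: "i < n \<Longrightarrow> j < n \<Longrightarrow> Eb n a b $$ (i,j) = (if i = a \<and> j = b then 1 else 0) - (if i = b \<and> j = a then 1 else 0)"
  by (simp add: Eb_def)
lemma Eb_skew: "Eb n a b \<in> skew_mats n"
  unfolding skew_mats_def
proof (intro CollectI conjI)
  show "transpose_mat (Eb n a b) = - Eb n a b"
  proof (rule eq_matI)
    fix i j assume "i < dim_row (- Eb n a b)" "j < dim_col (- Eb n a b)"
    hence ij: "i < n" "j < n" by auto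
    have "transpose_mat (Eb n a b) $$ (i,j) = Eb n a b $$ (j,i)" using ij by simp
    also have "\<dots> = - Eb n a b $$ (i,j)" unfolding Eb_entry[OF ij] Eb_entry[OF ij(2,1)]
      by (simp only: conj_commute[of "j = a"] conj_commute[of "j = b"] minus_diff_eq)
    also have "\<dots> = (- Eb n a b) $$ (i,j)" using ij by simp
    finally show "transpose_mat (Eb n a b) $$ (i,j) = (- Eb n a b) $$ (i,j)" .
  qed auto
qed (simp add: Eb_def)
lemma zero_skew: "0\<^sub>m n n \<in> skew_mats n"
  unfolding skew_mats_def
proof (intro CollectI conjI)
  show "transpose_mat (0\<^sub>m n n :: complex mat) = - 0\<^sub>m n n"
    by (rule eq_matI) auto
qed simp
lemma bX_skew: "bX n c \<in> skew_mats n" by (simp add: bX_def Eb_skew zero_skew)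
lemma bY_skew: "bY n c \<in> skew_mats n" by (simp add: bY_def Eb_skew zero_skew)

lemma skew_entry: assumes "X \<in> skew_mats n" "i < n" "j < n" shows "X $$ (j,i) = - X $$ (i,j)"
proof -
  have "X \<in> carrier_mat n n" "transpose_mat X = - X" using assms(1) by (auto simp: skew_mats_def)
  hence d: "dim_row X = n" "dim_col X = n" by auto
  have "transpose_mat X $$ (i,j) = X $$ (j,i)" using d assms(2,3) by simp
  thus ?thesis using \<open>transpose_mat X = - X\<close> d assms(2,3) by simp
qed

lemma lc_skew: assumes "\<And>c. F c \<in> skew_mats n" shows "lc n C u F \<in> skew_mats n"
  unfolding skew_mats_def
proof (intro CollectI conjI)
  show "transpose_mat (lc n C u F) = - lc n C u F"
  proof (rule eq_matI)
    fix i j assume "i < dim_row (- lc n C u F)" "j < dim_col (- lc n C u F)"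
    hence ij: "i < n" "j < n" by auto
    have "transpose_mat (lc n C u F) $$ (i,j) = (\<Sum>c\<in>C. u c * F c $$ (j,i))" using ij by (simp add: lc_entry)
    also have "\<dots> = - (\<Sum>c\<in>C. u c * F c $$ (i,j))"
      by (simp add: skew_entry[OF assms ij] sum_negf[symmetric])
    finally show "transpose_mat (lc n C u F) $$ (i,j) = (- lc n C u F) $$ (i,j)" using ij by (simp add: lc_entry)
  qed auto
qed simp

lemma dbeta_sym_entry: assumes "A \<in> skew_mats (2*p)" "B \<in> skew_mats (2*p)" "X \<in> skew_mats (2*p)" "Y \<in> skew_mats (2*p)"
  "i < 2*p" "j < 2*p" shows "dbeta p A B X Y $$ (j,i) = dbeta p A B X Y $$ (i,j)"
proof -
  have c: "beta p X B \<in> carrier_mat (2*p) (2*p)" "beta p A Y \<in> carrier_mat (2*p) (2*p)"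
    using assms beta_carrier skewD by blast+
  show ?thesis unfolding dbeta_def using c assms beta_sym_entry[OF assms(3,2)] beta_sym_entry[OF assms(1,4)] by simp
qed

lemma Jc_eq: assumes "A \<in> carrier_mat (2*p) (2*p)" "B \<in> carrier_mat (2*p) (2*p)"
  shows "Jc p (A,B) r c = (if upr (2*p) r then dbeta p A B (bX (2*p) c) (bY (2*p) c) $$ (r div (2*p), r mod (2*p)) else 0)"
  unfolding Jc_def fstc_eq[OF assms(1)] sndc_eq[OF assms(2)] ..

lemma idx: fixes i j n :: nat assumes "i < n" "j < n"
  shows "i*n+j < n*n" "(i*n+j) div n = i" "(i*n+j) mod n = j"
proof -
  show "(i*n+j) div n = i" "(i*n+j) mod n = j" using assms by auto
  have "i*n+j < i*n + n" using assms by simp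
  also have "\<dots> = (Suc i) * n" by simp
  also have "\<dots> \<le> n*n" using assms(1) mult_le_mono1[of "Suc i" n n] by simp
  finally show "i*n+j < n*n" .
qed

lemma gen_surj: assumes A: "A \<in> skew_mats (2*p)" and B: "B \<in> skew_mats (2*p)" and f: "fgen p (A,B) \<noteq> 0"
  shows "dbeta_surjective p A B"
  unfolding dbeta_surjective_def
proof (intro ballI)
  fix S assume S: "S \<in> sym_mats (2*p)"
  define n where "n = 2*p"
  define N where "N = n*n"
  have Ac: "A \<in> carrier_mat n n" and Bc: "B \<in> carrier_mat n n" using A B skewD n_def by blast+
  have G: "Gm p (A,B) \<in> carrier_mat N N" unfolding N_def n_def by (rule Gm_carrier)
  from det_non_zero_imp_unit[OF G f[unfolded fgen_def], unfolded Units_def, of "()"]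
  obtain Bi where Bi: "Bi \<in> carrier_mat N N" and GB: "Gm p (A,B) * Bi = 1\<^sub>m N"
    by (auto simp: ring_mat_def)
  define s where "s = vec N (\<lambda>r. if upr n r then S $$ (r div n, r mod n) else 0)"
  define w where "w = Bi *\<^sub>v s"
  have sc: "s \<in> carrier_vec N" by (simp add: s_def)
  have wc: "w \<in> carrier_vec N" unfolding w_def by (rule mult_mat_vec_carrier[OF Bi sc])
  have Gw: "Gm p (A,B) *\<^sub>v w = s"
    unfolding w_def using assoc_mult_mat_vec[OF G Bi sc, symmetric] GB sc by simp
  define u where "u c = (\<Sum>r'<N. Jc p (A,B) r' c * w $ r')" for c
  define X where "X = lc n (Cs n) u (bX n)"
  define Y where "Y = lc n (Cs n) u (bY n)"
  have Xs: "X \<in> skew_mats (2*p)" unfolding X_def n_def by (intro lc_skew bX_skew)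
  have Ys: "Y \<in> skew_mats (2*p)" unfolding Y_def n_def by (intro lc_skew bY_skew)
  have up: "dbeta p A B X Y $$ (i,j) = S $$ (i,j)" if ij: "i < n" "j < n" "i \<le> j" for i j
  proof -
    define r where "r = i*n+j"
    have r: "r < N" "r div n = i" "r mod n = j" using idx[OF ij(1,2)] unfolding r_def N_def by auto
    have ur: "upr n r" using r ij by (simp add: upr_def)
    have "dbeta p A B X Y $$ (i,j) = (\<Sum>c\<in>Cs n. u c * dbeta p A B (bX n c) (bY n c) $$ (i,j))"
      unfolding X_def Y_def n_def using ij Ac Bc n_def by (intro dbeta_lin) auto
    also have "\<dots> = (\<Sum>c\<in>Cs n. u c * Jc p (A,B) r c)"
      using ur r Ac Bc by (simp add: Jc_eq n_def)
    also have "\<dots> = (\<Sum>r'<N. (\<Sum>c\<in>Cs n. Jc p (A,B) r c * Jc p (A,B) r' c) * w $ r')"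
      unfolding u_def sum_distrib_right sum_distrib_left by (subst sum.swap) (simp add: ac_simps)
    also have "\<dots> = (\<Sum>r'<N. Gm p (A,B) $$ (r,r') * w $ r')"
      using r ur by (intro sum.cong refl) (simp add: Gm_def N_def n_def)
    also have "\<dots> = (Gm p (A,B) *\<^sub>v w) $ r" using mult_vec_entry[OF G wc r(1)] by simp
    also have "\<dots> = S $$ (i,j)" unfolding Gw s_def using r ur by simp
    finally show ?thesis .
  qed
  have "dbeta p A B X Y = S"
  proof (rule eq_matI)
    have Sc: "S \<in> carrier_mat n n" using S by (simp add: sym_mats_def n_def)
    fix i j assume "i < dim_row S" "j < dim_col S"
    hence ij: "i < n" "j < n" using Sc by auto
    show "dbeta p A B X Y $$ (i,j) = S $$ (i,j)"
    proof (cases "i \<le> j")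
      case True thus ?thesis using up ij by simp
    next
      case False
      hence "dbeta p A B X Y $$ (i,j) = S $$ (j,i)"
        using up[of j i] ij dbeta_sym_entry[OF A B Xs Ys, of j i] by (simp add: n_def)
      thus ?thesis using sym_entry[OF S, of i j] ij by (simp add: n_def)
    qed
  next
    have c: "dbeta p A B X Y \<in> carrier_mat (2*p) (2*p)"
      unfolding dbeta_def using Ac Bc Xs Ys skewD n_def by (intro add_carrier_mat beta_carrier) blast+
    show "dim_row (dbeta p A B X Y) = dim_row S" "dim_col (dbeta p A B X Y) = dim_col S"
      using c S by (auto simp: sym_mats_def)
  qed
  thus "\<exists>X\<in>skew_mats (2*p). \<exists>Y\<in>skew_mats (2*p). dbeta p A B X Y = S" using Xs Ys by blast
qed


lemma sum_Cs: "(\<Sum>c\<in>Cs n. g c) = (\<Sum>a<n. \<Sum>b<n. g (False,a,b)) + (\<Sum>a<n. \<Sum>b<n. g (True,a,b))"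
proof -
  have "(\<Sum>c\<in>Cs n. g c) = (\<Sum>s\<in>UNIV. \<Sum>ab\<in>{..<n}\<times>{..<n}. g (s,ab))"
    unfolding Cs_def by (rule sum.cartesian_product')
  also have "\<dots> = (\<Sum>ab\<in>{..<n}\<times>{..<n}. g (False,ab)) + (\<Sum>ab\<in>{..<n}\<times>{..<n}. g (True,ab))"
    by (simp add: UNIV_bool)
  also have "(\<Sum>ab\<in>{..<n}\<times>{..<n}. g (False,ab)) = (\<Sum>a<n. \<Sum>b<n. g (False,a,b))"
    by (rule sum.cartesian_product')
  also have "(\<Sum>ab\<in>{..<n}\<times>{..<n}. g (True,ab)) = (\<Sum>a<n. \<Sum>b<n. g (True,a,b))"
    by (rule sum.cartesian_product')
  finally show ?thesis .
qed

lemma dsum1: fixes h :: "nat \<Rightarrow> nat \<Rightarrow> complex" assumes "i < n" "j < n"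
  shows "(\<Sum>a<n. \<Sum>b<n. if a = i then if b = j then h a b else 0 else 0) = h i j"
proof -
  have "\<And>a. (\<Sum>b<n. if a = i then if b = j then h a b else 0 else 0) = (if a = i then h a j else 0)"
    using assms by (simp add: sum.delta)
  hence "(\<Sum>a<n. \<Sum>b<n. if a = i then if b = j then h a b else 0 else 0) = (\<Sum>a<n. if a = i then h a j else 0)" by simp
  also have "\<dots> = h i j" using assms by simp
  finally show ?thesis .
qed

lemma dsum_delta: fixes h :: "nat \<Rightarrow> nat \<Rightarrow> complex" assumes "i < n" "j < n"
  shows "(\<Sum>a<n. \<Sum>b<n. h a b * ((if i = a \<and> j = b then 1 else 0) - (if i = b \<and> j = a then 1 else 0))) = h i j - h j i"
proof -
  have e: "\<And>a b. h a b * ((if i = a \<and> j = b then 1 else 0) - (if i = b \<and> j = a then 1 else 0))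
     = (if a = i then (if b = j then h a b else 0) else 0) - (if a = j then (if b = i then h a b else 0) else 0)"
    by auto
  have "(\<Sum>a<n. \<Sum>b<n. h a b * ((if i = a \<and> j = b then 1 else 0) - (if i = b \<and> j = a then 1 else 0)))
     = (\<Sum>a<n. \<Sum>b<n. (if a = i then (if b = j then h a b else 0) else 0)) - (\<Sum>a<n. \<Sum>b<n. (if a = j then (if b = i then h a b else 0) else 0))"
    unfolding e sum_subtractf ..
  also have "\<dots> = h i j - h j i" using dsum1[OF assms, of h] dsum1[OF assms(2,1), of h] by simp
  finally show ?thesis .
qed

lemma decompX: assumes "X \<in> skew_mats n" "i < n" "j < n" "\<And>a b. u (False,a,b) = X $$ (a,b) / 2"
  shows "(\<Sum>c\<in>Cs n. u c * bX n c $$ (i,j)) = X $$ (i,j)"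
proof -
  have "(\<Sum>c\<in>Cs n. u c * bX n c $$ (i,j)) = (\<Sum>a<n. \<Sum>b<n. (X $$ (a,b) / 2) * ((if i = a \<and> j = b then 1 else 0) - (if i = b \<and> j = a then 1 else 0)))"
    unfolding sum_Cs assms(4) using assms(2,3) by (simp add: bX_def Eb_entry)
  also have "\<dots> = X $$ (i,j) / 2 - X $$ (j,i) / 2" by (rule dsum_delta[OF assms(2,3)])
  also have "\<dots> = X $$ (i,j)" using skew_entry[OF assms(1-3)] by simp
  finally show ?thesis .
qed

lemma decompY: assumes "Y \<in> skew_mats n" "i < n" "j < n" "\<And>a b. u (True,a,b) = Y $$ (a,b) / 2"
  shows "(\<Sum>c\<in>Cs n. u c * bY n c $$ (i,j)) = Y $$ (i,j)"
proof -
  have "(\<Sum>c\<in>Cs n. u c * bY n c $$ (i,j)) = (\<Sum>a<n. \<Sum>b<n. (Y $$ (a,b) / 2) * ((if i = a \<and> j = b then 1 else 0) - (if i = b \<and> j = a then 1 else 0)))"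
    unfolding sum_Cs assms(4) using assms(2,3) by (simp add: bY_def Eb_entry)
  also have "\<dots> = Y $$ (i,j) / 2 - Y $$ (j,i) / 2" by (rule dsum_delta[OF assms(2,3)])
  also have "\<dots> = Y $$ (i,j)" using skew_entry[OF assms(1-3)] by simp
  finally show ?thesis .
qed

lemma lc_eq: assumes "X \<in> skew_mats n" "\<And>i j. i < n \<Longrightarrow> j < n \<Longrightarrow> (\<Sum>c\<in>C. u c * F c $$ (i,j)) = X $$ (i,j)"
  shows "lc n C u F = X"
proof -
  have Xc: "X \<in> carrier_mat n n" using assms(1) by (simp add: skew_mats_def)
  show ?thesis by (rule eq_matI) (use Xc assms(2) in \<open>auto simp: lc_entry\<close>)
qed


definition realm :: "nat \<Rightarrow> complex mat \<Rightarrow> bool" where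
  "realm n M \<longleftrightarrow> M \<in> carrier_mat n n \<and> (\<forall>i<n. \<forall>j<n. M $$ (i,j) \<in> \<real>)"

lemma realm_mult: assumes "realm n A" "realm n B" shows "realm n (A * B)"
  unfolding realm_def
proof (intro conjI allI impI)
  show "A * B \<in> carrier_mat n n" using assms unfolding realm_def by (meson mult_carrier_mat)
  fix i j assume "i < n" "j < n"
  thus "(A * B) $$ (i,j) \<in> \<real>" using assms unfolding realm_def
    by (subst mult_entry[of A n n B n]) (auto intro!: sum_in_Reals Reals_mult)
qed

lemma realm_minus: assumes "realm n A" "realm n B" shows "realm n (A - B)"
  using assms unfolding realm_def by (auto intro: Reals_diff)
lemma realm_plus: assumes "realm n A" "realm n B" shows "realm n (A + B)"
  using assms unfolding realm_def by (auto intro: Reals_add)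
lemma realm_uminus: assumes "realm n A" shows "realm n (- A)"
  using assms unfolding realm_def by (auto intro: Reals_minus)

lemma realm_J: "realm (2*p) (Jmat p)"
  unfolding realm_def by (auto simp: Jentry)
lemma realm_M0: "realm (2*p) (M0 p)"
  unfolding realm_def by (auto simp: M0_entry Mf_def G0f_def)
lemma realm_B0: "realm (2*p) (B0 p)"
  unfolding B0_def by (intro realm_uminus realm_mult realm_J realm_M0)
lemma realm_A0: "realm (2*p) (A0 p)"
  unfolding realm_def by (auto simp: A0_entry)
lemma realm_Eb: "realm n (Eb n a b)"
  unfolding realm_def by (auto simp: Eb_entry)
lemma realm_bX: "realm n (bX n c)"
  unfolding bX_def using realm_Eb[of n] by (auto simp: realm_def)
lemma realm_bY: "realm n (bY n c)"
  unfolding bY_def using realm_Eb[of n] by (auto simp: realm_def)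

lemma realm_beta: "realm (2*p) X \<Longrightarrow> realm (2*p) B \<Longrightarrow> realm (2*p) (beta p X B)"
  unfolding beta_def by (intro realm_minus realm_mult realm_J)

lemma Jc_real: assumes "r < 2*p*(2*p)" shows "cnj (Jc p (A0 p, B0 p) r c) = Jc p (A0 p, B0 p) r c"
proof -
  have "realm (2*p) (dbeta p (A0 p) (B0 p) (bX (2*p) c) (bY (2*p) c))"
    unfolding dbeta_def by (intro realm_plus realm_beta realm_A0 realm_B0 realm_bX realm_bY)
  hence "Jc p (A0 p, B0 p) r c \<in> \<real>"
    using upr_bounds[OF assms] unfolding Jc_eq[OF A0_carrier B0_carrier] realm_def by auto
  thus ?thesis by (simp add: Reals_cnj_iff)
qed


lemma cnj_mult_self: "cnj x * x = complex_of_real ((cmod x)^2)"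
  using complex_norm_square[of x] by (simp add: mult.commute)

lemma sum_sq_zero: assumes "finite A" "(\<Sum>c\<in>A. (cmod (f c))^2) = 0" "c \<in> A" shows "f c = 0"
proof -
  have "\<forall>c\<in>A. (cmod (f c))^2 = 0" using assms(1,2) by (subst sum_nonneg_eq_0_iff[symmetric]) auto
  thus ?thesis using assms(3) by simp
qed

lemma fgen_nz: assumes p4: "4 \<le> p" shows "fgen p (A0 p, B0 p) \<noteq> 0"
proof
  assume f0: "fgen p (A0 p, B0 p) = 0"
  let ?n = "2*p" let ?N = "2*p*(2*p)" let ?z = "(A0 p, B0 p)"
  let ?J = "Jc p ?z"
  obtain v where vc: "v \<in> carrier_vec ?N" and v0: "v \<noteq> 0\<^sub>v ?N" and Gv: "Gm p ?z *\<^sub>v v = 0\<^sub>v ?N"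
    using f0 det_0_iff_vec_prod_zero[OF Gm_carrier[of p ?z]] unfolding fgen_def by blast
  define a where "a c = (\<Sum>r'<?N. ?J r' c * v $ r')" for c
  have Gv_entry: "(Gm p ?z *\<^sub>v v) $ r = (\<Sum>c\<in>Cs ?n. ?J r c * a c) + (if \<not> upr ?n r then v $ r else 0)"
    if r: "r < ?N" for r
  proof -
    have "(Gm p ?z *\<^sub>v v) $ r = (\<Sum>r'<?N. Gm p ?z $$ (r,r') * v $ r')" by (rule mult_vec_entry[OF Gm_carrier vc r])
    also have "\<dots> = (\<Sum>r'<?N. (\<Sum>c\<in>Cs ?n. ?J r c * ?J r' c) * v $ r' + (if r' = r then (if \<not> upr ?n r then v $ r else 0) else 0))"
    proof (intro sum.cong refl)
      fix r' assume "r' \<in> {..<?N}"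
      hence r': "r' < ?N" by simp
      have "Gm p ?z $$ (r,r') = (\<Sum>c\<in>Cs ?n. ?J r c * ?J r' c) + (if r = r' \<and> \<not> upr ?n r then 1 else 0)"
        using r r' by (simp add: Gm_def)
      thus "Gm p ?z $$ (r,r') * v $ r' = (\<Sum>c\<in>Cs ?n. ?J r c * ?J r' c) * v $ r' + (if r' = r then (if \<not> upr ?n r then v $ r else 0) else 0)"
        by (cases "r' = r") (simp_all add: distrib_right)
    qed
    also have "\<dots> = (\<Sum>c\<in>Cs ?n. ?J r c * a c) + (if \<not> upr ?n r then v $ r else 0)"
      unfolding sum.distrib a_def sum_distrib_left sum_distrib_right using r
      by (subst sum.swap) (simp add: ac_simps)
    finally show ?thesis .
  qed
  have cnja: "cnj (a c) = (\<Sum>r<?N. ?J r c * cnj (v $ r))" for c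
    unfolding a_def by (simp add: Jc_real)
  have "0 = (\<Sum>r<?N. cnj (v $ r) * (Gm p ?z *\<^sub>v v) $ r)" using Gv by simp
  also have "\<dots> = (\<Sum>r<?N. cnj (v $ r) * ((\<Sum>c\<in>Cs ?n. ?J r c * a c) + (if \<not> upr ?n r then v $ r else 0)))"
    by (intro sum.cong refl) (simp add: Gv_entry)
  also have "\<dots> = (\<Sum>c\<in>Cs ?n. cnj (a c) * a c) + (\<Sum>r<?N. if \<not> upr ?n r then cnj (v $ r) * v $ r else 0)"
  proof -
    have p1: "(\<Sum>r<?N. cnj (v $ r) * (\<Sum>c\<in>Cs ?n. ?J r c * a c)) = (\<Sum>c\<in>Cs ?n. cnj (a c) * a c)"
    proof -
      have "(\<Sum>r<?N. cnj (v $ r) * (\<Sum>c\<in>Cs ?n. ?J r c * a c)) = (\<Sum>r<?N. \<Sum>c\<in>Cs ?n. (?J r c * cnj (v $ r)) * a c)"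
        by (intro sum.cong refl) (simp add: sum_distrib_left mult.assoc mult.left_commute)
      also have "\<dots> = (\<Sum>c\<in>Cs ?n. \<Sum>r<?N. (?J r c * cnj (v $ r)) * a c)" by (rule sum.swap)
      also have "\<dots> = (\<Sum>c\<in>Cs ?n. cnj (a c) * a c)" unfolding cnja sum_distrib_right ..
      finally show ?thesis .
    qed
    have p2: "(\<Sum>r<?N. cnj (v $ r) * (if \<not> upr ?n r then v $ r else 0)) = (\<Sum>r<?N. if \<not> upr ?n r then cnj (v $ r) * v $ r else 0)"
      by (intro sum.cong refl) simp
    show ?thesis unfolding distrib_left sum.distrib p1 p2 ..
  qed
  also have "\<dots> = complex_of_real ((\<Sum>c\<in>Cs ?n. (cmod (a c))^2) + (\<Sum>r<?N. if \<not> upr ?n r then (cmod (v $ r))^2 else 0))"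
  proof -
    have e1: "(\<Sum>c\<in>Cs ?n. cnj (a c) * a c) = complex_of_real (\<Sum>c\<in>Cs ?n. (cmod (a c))^2)"
      unfolding of_real_sum by (intro sum.cong refl) (rule cnj_mult_self)
    have e2: "(\<Sum>r<?N. if \<not> upr ?n r then cnj (v $ r) * v $ r else 0) = complex_of_real (\<Sum>r<?N. if \<not> upr ?n r then (cmod (v $ r))^2 else 0)"
      unfolding of_real_sum by (intro sum.cong refl) (simp add: cnj_mult_self)
    show ?thesis unfolding e1 e2 of_real_add[symmetric] ..
  qed
  finally have R: "(\<Sum>c\<in>Cs ?n. (cmod (a c))^2) + (\<Sum>r<?N. if \<not> upr ?n r then (cmod (v $ r))^2 else 0) = 0"
    by (rule of_real_eq_0_iff[THEN iffD1, OF sym])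
  have nn1: "0 \<le> (\<Sum>c\<in>Cs ?n. (cmod (a c))^2)" by (intro sum_nonneg) auto
  have nn2: "0 \<le> (\<Sum>r<?N. if \<not> upr ?n r then (cmod (v $ r))^2 else 0)" by (intro sum_nonneg) auto
  have R1: "(\<Sum>c\<in>Cs ?n. (cmod (a c))^2) = 0" and R2: "(\<Sum>r<?N. if \<not> upr ?n r then (cmod (v $ r))^2 else 0) = 0"
    using R nn1 nn2 by linarith+
  have a0: "a c = 0" if "c \<in> Cs ?n" for c using sum_sq_zero[OF Cs_finite R1 that] .
  have vlow: "v $ r = 0" if "r < ?N" "\<not> upr ?n r" for r
  proof -
    have "\<forall>r\<in>{..<?N}. (if \<not> upr ?n r then (cmod (v $ r))^2 else 0) = 0"
      using R2 by (subst sum_nonneg_eq_0_iff[symmetric]) auto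
    moreover have "r \<in> {..<?N}" using that(1) by simp
    ultimately have "(if \<not> upr ?n r then (cmod (v $ r))^2 else 0) = 0" by (rule bspec)
    thus ?thesis using that(2) by simp
  qed
  define S where "S = mat ?n ?n (\<lambda>(i,j). if i \<le> j then cnj (v $ (i*?n+j)) else cnj (v $ (j*?n+i)))"
  have Ssym: "S \<in> sym_mats ?n"
    unfolding sym_mats_def S_def by (auto intro!: eq_matI)
  obtain X Y where X: "X \<in> skew_mats ?n" and Y: "Y \<in> skew_mats ?n" and XY: "dbeta p (A0 p) (B0 p) X Y = S"
    using surj_point[OF p4] Ssym unfolding dbeta_surjective_def by blast
  define u where "u c = (if fst c then Y $$ (fst (snd c), snd (snd c)) / 2 else X $$ (fst (snd c), snd (snd c)) / 2)" for c
  have LX: "lc ?n (Cs ?n) u (bX ?n) = X"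
    by (rule lc_eq[OF X], rule decompX[OF X]) (auto simp: u_def)
  have LY: "lc ?n (Cs ?n) u (bY ?n) = Y"
    by (rule lc_eq[OF Y], rule decompY[OF Y]) (auto simp: u_def)
  have uJ: "(\<Sum>c\<in>Cs ?n. u c * ?J r c) = (if upr ?n r then cnj (v $ r) else 0)" if r: "r < ?N" for r
  proof (cases "upr ?n r")
    case False thus ?thesis by (simp add: Jc_def)
  next
    case True
    define i where "i = r div ?n" define j where "j = r mod ?n"
    have ij: "i < ?n" "j < ?n" using upr_bounds[OF r] i_def j_def by auto
    have ijle: "i \<le> j" using True by (simp add: upr_def i_def j_def)
    have rij: "i*?n+j = r" unfolding i_def j_def by (rule div_mult_mod_eq)
    have "(\<Sum>c\<in>Cs ?n. u c * ?J r c) = (\<Sum>c\<in>Cs ?n. u c * dbeta p (A0 p) (B0 p) (bX ?n c) (bY ?n c) $$ (i,j))"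
      using True by (simp add: Jc_eq[OF A0_carrier B0_carrier] i_def j_def)
    also have "\<dots> = dbeta p (A0 p) (B0 p) (lc ?n (Cs ?n) u (bX ?n)) (lc ?n (Cs ?n) u (bY ?n)) $$ (i,j)"
      by (rule dbeta_lin[symmetric, OF A0_carrier B0_carrier bX_carrier bY_carrier ij])
    also have "\<dots> = S $$ (i,j)" unfolding LX LY XY ..
    also have "\<dots> = cnj (v $ r)" using ij ijle rij by (simp add: S_def)
    finally show ?thesis using True by simp
  qed
  have "0 = (\<Sum>c\<in>Cs ?n. u c * a c)" using a0 by simp
  also have "\<dots> = (\<Sum>r<?N. v $ r * (\<Sum>c\<in>Cs ?n. u c * ?J r c))"
    unfolding a_def sum_distrib_left sum_distrib_right by (subst sum.swap) (simp add: ac_simps)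
  also have "\<dots> = (\<Sum>r<?N. if upr ?n r then cnj (v $ r) * v $ r else 0)"
  proof (intro sum.cong refl)
    fix r assume "r \<in> {..<?N}"
    hence r: "r < ?N" by simp
    show "v $ r * (\<Sum>c\<in>Cs ?n. u c * ?J r c) = (if upr ?n r then cnj (v $ r) * v $ r else 0)"
      unfolding uJ[OF r] by simp
  qed
  also have "\<dots> = complex_of_real (\<Sum>r<?N. if upr ?n r then (cmod (v $ r))^2 else 0)"
    unfolding of_real_sum by (intro sum.cong refl) (simp add: cnj_mult_self)
  finally have R3: "(\<Sum>r<?N. if upr ?n r then (cmod (v $ r))^2 else 0) = 0"
    by (rule of_real_eq_0_iff[THEN iffD1, OF sym])
  have vup: "v $ r = 0" if "r < ?N" "upr ?n r" for r
  proof -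
    have "\<forall>r\<in>{..<?N}. (if upr ?n r then (cmod (v $ r))^2 else 0) = 0"
      using R3 by (subst sum_nonneg_eq_0_iff[symmetric]) auto
    moreover have "r \<in> {..<?N}" using that(1) by simp
    ultimately have "(if upr ?n r then (cmod (v $ r))^2 else 0) = 0" by (rule bspec)
    thus ?thesis using that(2) by simp
  qed
  have "v = 0\<^sub>v ?N"
    by (rule eq_vecI) (use vc vlow vup in auto)
  thus False using v0 by simp
qed


inductive pfd :: "nat \<Rightarrow> nat \<Rightarrow> (complex mat \<Rightarrow> complex) \<Rightarrow> bool" for n where
  c: "pfd n d (\<lambda>_. c)"
| e: "i < n \<Longrightarrow> j < n \<Longrightarrow> 1 \<le> d \<Longrightarrow> pfd n d (\<lambda>S. S $$ (i,j))"
| a: "pfd n d f \<Longrightarrow> pfd n d g \<Longrightarrow> pfd n d (\<lambda>x. f x + g x)"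
| m: "pfd n d1 f \<Longrightarrow> pfd n d2 g \<Longrightarrow> pfd n (d1 + d2) (\<lambda>x. f x * g x)"

lemma pfd_mono: "pfd n d f \<Longrightarrow> d \<le> e \<Longrightarrow> pfd n e f"
proof (induction arbitrary: e rule: pfd.induct)
  case (c d c) show ?case by (rule pfd.c)
next
  case (e i j d) thus ?case by (intro pfd.e) auto
next
  case (a d f g) thus ?case by (intro pfd.a) auto
next
  case (m d1 f d2 g)
  have "pfd n (e - d2 + d2) (\<lambda>x. f x * g x)" using m by (intro pfd.m) auto
  thus ?case using m by simp
qed

lemma pf1_pfd: "poly_fun1 n g \<Longrightarrow> \<exists>d. pfd n d g"
proof (induction rule: poly_fun1.induct)
  case (const1 c) thus ?case by (blast intro: pfd.c)
next
  case (entry1 i j) thus ?case by (blast intro: pfd.e[of i n j 1])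
next
  case (add1 f g)
  then obtain d1 d2 where "pfd n d1 f" "pfd n d2 g" by blast
  hence "pfd n (max d1 d2) f" "pfd n (max d1 d2) g" by (auto intro: pfd_mono)
  thus ?case by (blast intro: pfd.a)
next
  case (mult1 f g) thus ?case by (blast intro: pfd.m)
qed

lemma pfd0: "pfd n d f \<Longrightarrow> d = 0 \<Longrightarrow> \<exists>c. f = (\<lambda>_. c)"
proof (induction rule: pfd.induct)
  case (a d f g) then obtain c1 c2 where "f = (\<lambda>_. c1)" "g = (\<lambda>_. c2)" by blast
  thus ?case by auto
next
  case (m d1 f d2 g) then obtain c1 c2 where "f = (\<lambda>_. c1)" "g = (\<lambda>_. c2)" by auto
  thus ?case by auto
qed auto

lemma pfd_poly: "pfd n d g \<Longrightarrow> (\<And>i j. i < n \<Longrightarrow> j < n \<Longrightarrow> \<exists>q. \<forall>t. M t $$ (i,j) = poly q t) \<Longrightarrow> \<exists>q. \<forall>t. g (M t) = poly q t"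
proof (induction rule: pfd.induct)
  case (c d c) thus ?case by (intro exI[of _ "[:c:]"]) simp
next
  case (e i j d) thus ?case by blast
next
  case (a d f g)
  then obtain q1 q2 where "\<forall>t. f (M t) = poly q1 t" "\<forall>t. g (M t) = poly q2 t" by blast
  thus ?case by (intro exI[of _ "q1 + q2"]) simp
next
  case (m d1 f d2 g)
  then obtain q1 q2 where "\<forall>t. f (M t) = poly q1 t" "\<forall>t. g (M t) = poly q2 t" by blast
  thus ?case by (intro exI[of _ "q1 * q2"]) simp
qed

lemma pf2_poly: "poly_fun2 n f \<Longrightarrow> (\<And>i j. i < n \<Longrightarrow> j < n \<Longrightarrow> \<exists>q. \<forall>t. fst (L t) $$ (i,j) = poly q t)
   \<Longrightarrow> (\<And>i j. i < n \<Longrightarrow> j < n \<Longrightarrow> \<exists>q. \<forall>t. snd (L t) $$ (i,j) = poly q t) \<Longrightarrow> \<exists>q. \<forall>t. f (L t) = poly q t"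
proof (induction rule: poly_fun2.induct)
  case (const2 c) thus ?case by (intro exI[of _ "[:c:]"]) simp
next
  case (fst2 i j) then obtain q where "\<forall>t. fst (L t) $$ (i,j) = poly q t" by blast
  thus ?case by (intro exI[of _ q]) (simp add: case_prod_unfold)
next
  case (snd2 i j) then obtain q where "\<forall>t. snd (L t) $$ (i,j) = poly q t" by blast
  thus ?case by (intro exI[of _ q]) (simp add: case_prod_unfold)
next
  case (add2 f g)
  then obtain q1 q2 where "\<forall>t. f (L t) = poly q1 t" "\<forall>t. g (L t) = poly q2 t" by blast
  thus ?case by (intro exI[of _ "q1 + q2"]) simp
next
  case (mult2 f g)
  then obtain q1 q2 where "\<forall>t. f (L t) = poly q1 t" "\<forall>t. g (L t) = poly q2 t" by blast
  thus ?case by (intro exI[of _ "q1 * q2"]) simp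
qed

definition curve_deriv :: "nat \<Rightarrow> (complex \<Rightarrow> complex mat) \<Rightarrow> complex mat \<Rightarrow> bool" where
  "curve_deriv n M H \<longleftrightarrow> (\<forall>i<n. \<forall>j<n. ((\<lambda>t. M t $$ (i,j)) has_field_derivative H $$ (i,j)) (at 0))"

lemma pfd_deriv: "pfd n d g \<Longrightarrow> \<exists>D. pfd n (d - 1) D \<and> (\<forall>M. curve_deriv n M H \<longrightarrow> ((\<lambda>t. g (M t)) has_field_derivative D (M 0)) (at 0))"
proof (induction rule: pfd.induct)
  case (c d c) show ?case by (intro exI[of _ "\<lambda>_. 0"]) (auto intro: pfd.c)
next
  case (e i j d) show ?case
    by (intro exI[of _ "\<lambda>_. H $$ (i,j)"]) (use e in \<open>auto intro: pfd.c simp: curve_deriv_def\<close>)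
next
  case (a d f g)
  then obtain D1 D2 where D1: "pfd n (d - 1) D1" "\<forall>M. curve_deriv n M H \<longrightarrow> ((\<lambda>t. f (M t)) has_field_derivative D1 (M 0)) (at 0)"
    and D2: "pfd n (d - 1) D2" "\<forall>M. curve_deriv n M H \<longrightarrow> ((\<lambda>t. g (M t)) has_field_derivative D2 (M 0)) (at 0)" by blast
  show ?case by (intro exI[of _ "\<lambda>x. D1 x + D2 x"]) (use D1 D2 in \<open>auto intro: pfd.a DERIV_add\<close>)
next
  case (m d1 f d2 g)
  then obtain D1 D2 where D1: "pfd n (d1 - 1) D1" "\<forall>M. curve_deriv n M H \<longrightarrow> ((\<lambda>t. f (M t)) has_field_derivative D1 (M 0)) (at 0)"
    and D2: "pfd n (d2 - 1) D2" "\<forall>M. curve_deriv n M H \<longrightarrow> ((\<lambda>t. g (M t)) has_field_derivative D2 (M 0)) (at 0)" by blast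
  show ?case
  proof (cases "d1 = 0")
    case True
    then obtain c where fc: "f = (\<lambda>_. c)" using pfd0[OF m.hyps(1)] by blast
    have "pfd n (0 + (d2 - 1)) (\<lambda>x. c * D2 x)" by (intro pfd.m pfd.c D2(1))
    moreover have "((\<lambda>t. f (M t) * g (M t)) has_field_derivative c * D2 (M 0)) (at 0)" if "curve_deriv n M H" for M
      using DERIV_cmult[OF D2(2)[rule_format, OF that], of c] fc by simp
    ultimately show ?thesis using True by (intro exI[of _ "\<lambda>x. c * D2 x"]) auto
  next
    case F1: False
    show ?thesis
    proof (cases "d2 = 0")
      case True
      then obtain c where gc: "g = (\<lambda>_. c)" using pfd0[OF m.hyps(2)] by blast
      have "pfd n ((d1 - 1) + 0) (\<lambda>x. D1 x * c)" by (intro pfd.m pfd.c D1(1))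
      moreover have "((\<lambda>t. f (M t) * g (M t)) has_field_derivative D1 (M 0) * c) (at 0)" if "curve_deriv n M H" for M
        using DERIV_cmult[OF D1(2)[rule_format, OF that], of c] gc by (simp add: mult.commute)
      ultimately show ?thesis using True by (intro exI[of _ "\<lambda>x. D1 x * c"]) auto
    next
      case False
      have "pfd n ((d1 - 1) + d2) (\<lambda>x. D1 x * g x)" by (intro pfd.m D1(1) m.hyps(2))
      hence 1: "pfd n (d1 + d2 - 1) (\<lambda>x. D1 x * g x)" using F1 by (simp add: add.commute)
      have "pfd n (d1 + (d2 - 1)) (\<lambda>x. f x * D2 x)" by (intro pfd.m D2(1) m.hyps(1))
      hence 2: "pfd n (d1 + d2 - 1) (\<lambda>x. f x * D2 x)" using False by simp
      have 3: "((\<lambda>t. f (M t) * g (M t)) has_field_derivative D1 (M 0) * g (M 0) + f (M 0) * D2 (M 0)) (at 0)"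
        if "curve_deriv n M H" for M
        using DERIV_mult[OF D1(2)[rule_format, OF that] D2(2)[rule_format, OF that]] by (simp add: mult.commute)
      show ?thesis using 1 2 3 by (intro exI[of _ "\<lambda>x. D1 x * g x + f x * D2 x"]) (auto intro: pfd.a)
    qed
  qed
qed


lemma tri_entry: assumes "U \<in> carrier_mat n n" "W \<in> carrier_mat n n" "V \<in> carrier_mat n n" "i < n" "j < n"
  shows "(U * W * V) $$ (i,j) = (\<Sum>k<n. \<Sum>l<n. U $$ (i,k) * (W $$ (k,l) * V $$ (l,j)))"
proof -
  have "(U * W * V) $$ (i,j) = (U * (W * V)) $$ (i,j)" using assoc_mult_mat[OF assms(1-3)] by simp
  also have "\<dots> = (\<Sum>k<n. U $$ (i,k) * (W * V) $$ (k,j))"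
    using assms by (intro mult_entry) auto
  also have "\<dots> = (\<Sum>k<n. \<Sum>l<n. U $$ (i,k) * (W $$ (k,l) * V $$ (l,j)))"
    using assms by (intro sum.cong refl) (simp del: index_mult_mat(1) add: mult_entry[OF assms(2,3)] sum_distrib_left)
  finally show ?thesis .
qed

lemma dsum_expand: fixes t :: complex
  shows "(\<Sum>k<n. \<Sum>l<n. (a k + t * x k) * (w k l * (b l + t * y l)))
   = (\<Sum>k<n. \<Sum>l<n. a k * (w k l * b l)) + t * ((\<Sum>k<n. \<Sum>l<n. x k * (w k l * b l)) + (\<Sum>k<n. \<Sum>l<n. a k * (w k l * y l)))
     + t^2 * (\<Sum>k<n. \<Sum>l<n. x k * (w k l * y l))"
proof -
  have "\<And>k l. (a k + t * x k) * (w k l * (b l + t * y l)) = a k * (w k l * b l) + t * (x k * (w k l * b l)) + t * (a k * (w k l * y l)) + t^2 * (x k * (w k l * y l))"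
    by (simp add: algebra_simps power2_eq_square)
  hence "(\<Sum>k<n. \<Sum>l<n. (a k + t * x k) * (w k l * (b l + t * y l)))
     = (\<Sum>k<n. \<Sum>l<n. a k * (w k l * b l) + t * (x k * (w k l * b l)) + t * (a k * (w k l * y l)) + t^2 * (x k * (w k l * y l)))"
    by simp
  also have "\<dots> = (\<Sum>k<n. \<Sum>l<n. a k * (w k l * b l)) + t * (\<Sum>k<n. \<Sum>l<n. x k * (w k l * b l)) + t * (\<Sum>k<n. \<Sum>l<n. a k * (w k l * y l))
     + t^2 * (\<Sum>k<n. \<Sum>l<n. x k * (w k l * y l))"
    by (simp only: sum.distrib sum_distrib_left)
  finally show ?thesis by (simp add: algebra_simps)
qed

lemma beta_expand: assumes "A \<in> carrier_mat (2*p) (2*p)" "B \<in> carrier_mat (2*p) (2*p)"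
  "X \<in> carrier_mat (2*p) (2*p)" "Y \<in> carrier_mat (2*p) (2*p)" "i < 2*p" "j < 2*p"
  shows "beta p (A + t \<cdot>\<^sub>m X) (B + t \<cdot>\<^sub>m Y) $$ (i,j) = beta p A B $$ (i,j) + t * dbeta p A B X Y $$ (i,j) + t^2 * beta p X Y $$ (i,j)"
proof -
  let ?n = "2*p"
  have c1: "A + t \<cdot>\<^sub>m X \<in> carrier_mat ?n ?n" "B + t \<cdot>\<^sub>m Y \<in> carrier_mat ?n ?n" using assms by auto
  have bent: "beta p U V $$ (i,j) = (\<Sum>k<?n. \<Sum>l<?n. U $$ (i,k) * (Jmat p $$ (k,l) * V $$ (l,j))) - (\<Sum>k<?n. \<Sum>l<?n. V $$ (i,k) * (Jmat p $$ (k,l) * U $$ (l,j)))"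
    if "U \<in> carrier_mat ?n ?n" "V \<in> carrier_mat ?n ?n" for U V
  proof -
    have "U * Jmat p * V \<in> carrier_mat ?n ?n" "V * Jmat p * U \<in> carrier_mat ?n ?n" using that by (meson Jmat_carrier mult_carrier_mat)+
    hence d: "dim_row (V * Jmat p * U) = ?n" "dim_col (V * Jmat p * U) = ?n" by auto
    have "beta p U V $$ (i,j) = (U * Jmat p * V) $$ (i,j) - (V * Jmat p * U) $$ (i,j)"
      unfolding beta_def by (rule index_minus_mat(1)) (use d assms(5,6) in auto)
    thus ?thesis by (simp only: tri_entry[OF that(1) Jmat_carrier that(2) assms(5,6)] tri_entry[OF that(2) Jmat_carrier that(1) assms(5,6)])
  qed
  have ent: "(U + t \<cdot>\<^sub>m V) $$ (k,l) = U $$ (k,l) + t * V $$ (k,l)" if "U \<in> carrier_mat ?n ?n" "V \<in> carrier_mat ?n ?n" "k < ?n" "l < ?n" for U V k l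
    using that by simp
  have dent: "dbeta p A B X Y $$ (i,j) = beta p X B $$ (i,j) + beta p A Y $$ (i,j)"
    unfolding dbeta_def using assms beta_carrier[of X p B] beta_carrier[of A p Y] by simp
  have e1: "(\<Sum>k<?n. \<Sum>l<?n. (A + t \<cdot>\<^sub>m X) $$ (i,k) * (Jmat p $$ (k,l) * (B + t \<cdot>\<^sub>m Y) $$ (l,j)))
      = (\<Sum>k<?n. \<Sum>l<?n. (A $$ (i,k) + t * X $$ (i,k)) * (Jmat p $$ (k,l) * (B $$ (l,j) + t * Y $$ (l,j))))"
    using assms by (intro sum.cong refl) (simp add: ent)
  have e2: "(\<Sum>k<?n. \<Sum>l<?n. (B + t \<cdot>\<^sub>m Y) $$ (i,k) * (Jmat p $$ (k,l) * (A + t \<cdot>\<^sub>m X) $$ (l,j)))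
      = (\<Sum>k<?n. \<Sum>l<?n. (B $$ (i,k) + t * Y $$ (i,k)) * (Jmat p $$ (k,l) * (A $$ (l,j) + t * X $$ (l,j))))"
    using assms by (intro sum.cong refl) (simp add: ent)
  show ?thesis
    unfolding bent[OF c1] e1 e2 dsum_expand dent bent[OF assms(1,2)] bent[OF assms(3,2)] bent[OF assms(1,4)] bent[OF assms(3,4)]
    by (simp add: algebra_simps)
qed


lemma skew_add_smult: assumes "A \<in> skew_mats n" "X \<in> skew_mats n" shows "A + t \<cdot>\<^sub>m X \<in> skew_mats n"
proof -
  have A: "A \<in> carrier_mat n n" "transpose_mat A = - A" and X: "X \<in> carrier_mat n n" "transpose_mat X = - X"
    using assms by (auto simp: skew_mats_def)
  have "transpose_mat (A + t \<cdot>\<^sub>m X) = - (A + t \<cdot>\<^sub>m X)"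
  proof (rule eq_matI)
    fix i j assume "i < dim_row (- (A + t \<cdot>\<^sub>m X))" "j < dim_col (- (A + t \<cdot>\<^sub>m X))"
    hence ij: "i < n" "j < n" using A X by auto
    have "A $$ (j,i) = - A $$ (i,j)" "X $$ (j,i) = - X $$ (i,j)"
      using skew_entry[OF assms(1) ij] skew_entry[OF assms(2) ij] by auto
    thus "transpose_mat (A + t \<cdot>\<^sub>m X) $$ (i,j) = (- (A + t \<cdot>\<^sub>m X)) $$ (i,j)" using ij A X by simp
  qed (use A X in auto)
  thus ?thesis using A X by (auto simp: skew_mats_def)
qed

lemma sym_smult: assumes "S \<in> sym_mats n" shows "t \<cdot>\<^sub>m S \<in> sym_mats n"
proof -
  have Sc: "S \<in> carrier_mat n n" using assms by (simp add: sym_mats_def)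
  have "transpose_mat (t \<cdot>\<^sub>m S) = t \<cdot>\<^sub>m S"
  proof (rule eq_matI)
    fix i j assume "i < dim_row (t \<cdot>\<^sub>m S)" "j < dim_col (t \<cdot>\<^sub>m S)"
    hence ij: "i < n" "j < n" using Sc by auto
    show "transpose_mat (t \<cdot>\<^sub>m S) $$ (i,j) = (t \<cdot>\<^sub>m S) $$ (i,j)"
      using ij Sc sym_entry[OF assms ij] by simp
  qed (use Sc in auto)
  thus ?thesis using Sc by (simp add: sym_mats_def)
qed

lemma add_zero_smult: "A \<in> carrier_mat n n \<Longrightarrow> X \<in> carrier_mat n n \<Longrightarrow> A + 0 \<cdot>\<^sub>m X = (A :: complex mat)"
  by (auto intro!: eq_matI)

lemma beta_zero: "beta p (0\<^sub>m (2*p) (2*p)) (0\<^sub>m (2*p) (2*p)) = 0\<^sub>m (2*p) (2*p)"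
  unfolding beta_def by (auto intro!: eq_matI)

lemma quad_deriv: "((\<lambda>t::complex. c + t * h + t^2 * k) has_field_derivative h) (at 0)"
  by (auto intro!: derivative_eq_intros)

lemma quad_poly: "\<exists>q. \<forall>t::complex. c + t * h + t^2 * k = poly q t"
  by (intro exI[of _ "[:c, h, k:]"]) (simp add: algebra_simps power2_eq_square)

lemma dom_main: assumes p4: "4 \<le> p"
  shows "\<forall>g. pfd (2*p) d g \<longrightarrow> (\<forall>A\<in>skew_mats (2*p). \<forall>B\<in>skew_mats (2*p). g (beta p A B) = 0) \<longrightarrow> (\<forall>S\<in>sym_mats (2*p). g S = 0)"
proof (induction d)
  case 0
  show ?case
  proof (intro allI impI ballI)
    fix g S assume pg: "pfd (2*p) 0 g" and van: "\<forall>A\<in>skew_mats (2*p). \<forall>B\<in>skew_mats (2*p). g (beta p A B) = 0"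
    obtain c where gc: "g = (\<lambda>_. c)" using pfd0[OF pg] by blast
    have "g (beta p (0\<^sub>m (2*p) (2*p)) (0\<^sub>m (2*p) (2*p))) = 0" using van zero_skew by blast
    thus "g S = 0" using gc by simp
  qed
next
  case (Suc d)
  show ?case
  proof (intro allI impI ballI)
    fix g S assume pg: "pfd (2*p) (Suc d) g" and van: "\<forall>A\<in>skew_mats (2*p). \<forall>B\<in>skew_mats (2*p). g (beta p A B) = 0"
      and S: "S \<in> sym_mats (2*p)"
    let ?n = "2*p"
    have Sc: "S \<in> carrier_mat ?n ?n" using S by (simp add: sym_mats_def)
    obtain D where pD: "pfd ?n d D"
      and dD: "\<And>M. curve_deriv ?n M S \<Longrightarrow> ((\<lambda>t. g (M t)) has_field_derivative D (M 0)) (at 0)"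
      using pfd_deriv[OF pg, of S] by auto
    have vanU: "D (beta p A B) = 0" if A: "A \<in> skew_mats ?n" and B: "B \<in> skew_mats ?n" and f: "fgen p (A,B) \<noteq> 0" for A B
    proof -
      obtain X Y where X: "X \<in> skew_mats ?n" and Y: "Y \<in> skew_mats ?n" and XY: "dbeta p A B X Y = S"
        using gen_surj[OF A B f] S unfolding dbeta_surjective_def by blast
      have Ac: "A \<in> carrier_mat ?n ?n" and Bc: "B \<in> carrier_mat ?n ?n" and Xc: "X \<in> carrier_mat ?n ?n" and Yc: "Y \<in> carrier_mat ?n ?n"
        using A B X Y skewD by blast+
      define M where "M t = beta p (A + t \<cdot>\<^sub>m X) (B + t \<cdot>\<^sub>m Y)" for t
      have cd: "curve_deriv ?n M S"
        unfolding curve_deriv_def M_def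
      proof (intro allI impI)
        fix i j assume ij: "i < ?n" "j < ?n"
        show "((\<lambda>t. beta p (A + t \<cdot>\<^sub>m X) (B + t \<cdot>\<^sub>m Y) $$ (i, j)) has_field_derivative S $$ (i, j)) (at 0)"
          unfolding beta_expand[OF Ac Bc Xc Yc ij] XY by (rule quad_deriv)
      qed
      have "((\<lambda>t. g (M t)) has_field_derivative D (M 0)) (at 0)" by (rule dD[OF cd])
      moreover have "(\<lambda>t. g (M t)) = (\<lambda>t. 0)"
        unfolding M_def using van skew_add_smult[OF A X] skew_add_smult[OF B Y] by auto
      ultimately have "((\<lambda>t. 0) has_field_derivative D (M 0)) (at 0)" by simp
      hence "D (M 0) = 0" using DERIV_const DERIV_unique by blast
      thus ?thesis unfolding M_def add_zero_smult[OF Ac Xc] add_zero_smult[OF Bc Yc] .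
    qed
    have vanAll: "D (beta p A B) = 0" if A: "A \<in> skew_mats ?n" and B: "B \<in> skew_mats ?n" for A B
    proof -
      have Ac: "A \<in> carrier_mat ?n ?n" and Bc: "B \<in> carrier_mat ?n ?n" using A B skewD by blast+
      define U where "U = A - A0 p" define V where "V = B - B0 p"
      have Us: "U \<in> skew_mats ?n" and Vs: "V \<in> skew_mats ?n"
      proof -
        have "A + (-1) \<cdot>\<^sub>m A0 p \<in> skew_mats ?n" "B + (-1) \<cdot>\<^sub>m B0 p \<in> skew_mats ?n"
          by (intro skew_add_smult A B A0_skew B0_skew)+
        moreover have "A + (-1) \<cdot>\<^sub>m A0 p = U" "B + (-1) \<cdot>\<^sub>m B0 p = V"
          unfolding U_def V_def using Ac Bc by (auto intro!: eq_matI)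
        ultimately show "U \<in> skew_mats ?n" "V \<in> skew_mats ?n" by auto
      qed
      have Uc: "U \<in> carrier_mat ?n ?n" and Vc: "V \<in> carrier_mat ?n ?n" using Us Vs skewD by blast+
      define L where "L t = (A0 p + t \<cdot>\<^sub>m U, B0 p + t \<cdot>\<^sub>m V)" for t
      have Ls: "fst (L t) \<in> skew_mats ?n" "snd (L t) \<in> skew_mats ?n" for t
        unfolding L_def by (auto intro: skew_add_smult A0_skew B0_skew Us Vs)
      obtain q where q: "\<forall>t. fgen p (L t) = poly q t"
      proof -
        have "\<exists>q. \<forall>t. fgen p (L t) = poly q t"
        proof (rule pf2_poly[OF pf_fgen])
          fix i j assume ij: "i < ?n" "j < ?n"
          show "\<exists>q. \<forall>t. fst (L t) $$ (i,j) = poly q t"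
            using ij Uc by (intro exI[of _ "[:A0 p $$ (i,j), U $$ (i,j):]"]) (simp add: L_def)
          show "\<exists>q. \<forall>t. snd (L t) $$ (i,j) = poly q t"
            using ij Vc by (intro exI[of _ "[:B0 p $$ (i,j), V $$ (i,j):]"]) (simp add: L_def)
        qed
        thus ?thesis using that by blast
      qed
      have q0: "q \<noteq> 0"
      proof
        assume "q = 0"
        hence "fgen p (L 0) = 0" using q by simp
        moreover have "L 0 = (A0 p, B0 p)" unfolding L_def using add_zero_smult[OF A0_carrier Uc] add_zero_smult[OF B0_carrier Vc] by simp
        ultimately show False using fgen_nz[OF p4] by simp
      qed
      obtain r where r: "\<forall>t. D (beta p (fst (L t)) (snd (L t))) = poly r t"
      proof -
        have "\<exists>r. \<forall>t. D (beta p (fst (L t)) (snd (L t))) = poly r t"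
        proof (rule pfd_poly[OF pD])
          fix i j assume ij: "i < ?n" "j < ?n"
          have "\<forall>t. beta p (fst (L t)) (snd (L t)) $$ (i,j) = beta p (A0 p) (B0 p) $$ (i,j) + t * dbeta p (A0 p) (B0 p) U V $$ (i,j) + t^2 * beta p U V $$ (i,j)"
            unfolding L_def using beta_expand[OF A0_carrier B0_carrier Uc Vc ij] by simp
          thus "\<exists>q. \<forall>t. beta p (fst (L t)) (snd (L t)) $$ (i,j) = poly q t" using quad_poly by metis
        qed
        thus ?thesis using that by blast
      qed
      have "r = 0"
      proof (rule ccontr)
        assume "r \<noteq> 0"
        hence fin: "finite {t. poly r t = 0}" by (rule poly_roots_finite)
        have "UNIV \<subseteq> {t. poly r t = 0} \<union> {t. poly q t = 0}"
        proof
          fix t :: complex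
          show "t \<in> {t. poly r t = 0} \<union> {t. poly q t = 0}"
          proof (cases "poly q t = 0")
            case False
            hence "fgen p (fst (L t), snd (L t)) \<noteq> 0" using q by simp
            hence "D (beta p (fst (L t)) (snd (L t))) = 0" by (rule vanU[OF Ls])
            thus ?thesis using r by simp
          qed simp
        qed
        moreover have "finite ({t. poly r t = 0} \<union> {t. poly q t = 0})" using fin poly_roots_finite[OF q0] by simp
        ultimately have "finite (UNIV :: complex set)" by (rule finite_subset)
        thus False by (simp add: infinite_UNIV_char_0)
      qed
      hence "D (beta p (fst (L 1)) (snd (L 1))) = 0" using r by simp
      moreover have "fst (L 1) = A" "snd (L 1) = B"
        unfolding L_def U_def V_def using Ac Bc by (auto intro!: eq_matI)
      ultimately show ?thesis by simp
    qed
    have Dsym: "\<forall>S'\<in>sym_mats ?n. D S' = 0"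
      using Suc.IH pD vanAll by blast
    obtain q where q: "\<forall>t. g (t \<cdot>\<^sub>m S) = poly q t"
    proof -
      have "\<exists>q. \<forall>t. g (t \<cdot>\<^sub>m S) = poly q t"
      proof (rule pfd_poly[OF pg])
        fix i j assume ij: "i < ?n" "j < ?n"
        show "\<exists>q. \<forall>t. (t \<cdot>\<^sub>m S) $$ (i,j) = poly q t"
          using ij Sc by (intro exI[of _ "[:0, S $$ (i,j):]"]) simp
      qed
      thus ?thesis using that by blast
    qed
    have der0: "poly (pderiv q) t0 = 0" for t0
    proof -
      let ?M = "\<lambda>t. (t + t0) \<cdot>\<^sub>m S"
      have cd: "curve_deriv ?n ?M S"
        unfolding curve_deriv_def using Sc by (auto intro!: derivative_eq_intros)
      have "((\<lambda>t. g (?M t)) has_field_derivative D (?M 0)) (at 0)" by (rule dD[OF cd])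
      moreover have "D (?M 0) = 0" using Dsym sym_smult[OF S] by simp
      ultimately have "((\<lambda>t. poly q (t + t0)) has_field_derivative 0) (at 0)" using q by simp
      hence "(poly q has_field_derivative 0) (at (0 + t0))" by (subst DERIV_shift)
      moreover have "(poly q has_field_derivative poly (pderiv q) t0) (at (0 + t0))" by simp
      ultimately show ?thesis using DERIV_unique by blast
    qed
    hence "pderiv q = 0" using poly_all_0_iff_0 by blast
    hence "degree q = 0" by (simp add: pderiv_eq_0_iff)
    then obtain c where qc: "q = [:c:]" by (rule degree_eq_zeroE)
    have "1 \<cdot>\<^sub>m S = S" using Sc by (auto intro!: eq_matI)
    hence "g S = g (1 \<cdot>\<^sub>m S)" by simp
    also have "\<dots> = g (0 \<cdot>\<^sub>m S)" using q qc by simp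
    also have "0 \<cdot>\<^sub>m S = beta p (0\<^sub>m ?n ?n) (0\<^sub>m ?n ?n)" unfolding beta_zero using Sc by (auto intro!: eq_matI)
    also have "g \<dots> = 0" using van zero_skew by blast
    finally show "g S = 0" .
  qed
qed


theorem mainTheorem14:
  fixes p :: nat
  assumes "2 * p \<ge> 8"
  shows "holds_generally2 (2*p) (dbeta_surjective p) \<and> beta_dominant p"
proof
  have p4: "4 \<le> p" using assms by simp
  show "holds_generally2 (2*p) (dbeta_surjective p)"
    unfolding holds_generally2_def
  proof (intro exI conjI)
    show "poly_fun2 (2*p) (fgen p)" by (rule pf_fgen)
    show "\<exists>A\<in>skew_mats (2*p). \<exists>B\<in>skew_mats (2*p). fgen p (A,B) \<noteq> 0"
      using fgen_nz[OF p4] A0_skew B0_skew by blast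
    show "\<forall>A\<in>skew_mats (2*p). \<forall>B\<in>skew_mats (2*p). fgen p (A,B) \<noteq> 0 \<longrightarrow> dbeta_surjective p A B"
      using gen_surj by blast
  qed
  show "beta_dominant p"
    unfolding beta_dominant_def
  proof (intro allI impI)
    fix g assume "poly_fun1 (2*p) g" and van: "\<forall>A\<in>skew_mats (2*p). \<forall>B\<in>skew_mats (2*p). g (beta p A B) = 0"
    then obtain d where "pfd (2*p) d g" using pf1_pfd by blast
    thus "\<forall>S\<in>sym_mats (2*p). g S = 0" using dom_main[OF p4, of d] van by blast
  qed
qed


end
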